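(* Let $\mathbb F\in\{\mathbb C,\mathbb H\}$, $d=\dim_{\mathbb R}\mathbb F$, $0\le p<q$, and define $p',q'$ by $p'+1=d(p+1)$, $q'+1=d(q+1)$. Then $\rho_{\mathfrak q}(p,q,d)=\tfrac12(p'+q')=\rho_{\mathfrak q}(p',q',1)$, and for every discrete series parameter $\lambda$ of $\mathbb X(p+1,q+1;\mathbb F)$, $$R^d_{p,q}\tilde\psi_\lambda(a_s)=e^{-(d-1)s}R^1_{p',q'}\tilde\psi_\lambda(a_s)\qquad(s\in\mathbb R),$$ and consequently $\mathcal A^d_{p,q}\tilde\psi_\lambda=\mathcal A^1_{p',q'}\tilde\psi_\lambda$.
   Context: For $\mathbb F\in\{\mathbb R,\mathbb C,\mathbb H\}$, $d=\dim_{\mathbb R}\mathbb F$, integers $p\ge0,q\ge1$: $G=\mathrm U(p+1,q+1;\mathbb F)$ preserves $[x,y]=\sum_{i=1}^{p+1}x_i\bar y_i-\sum_{i=p+2}^{p+q+2}x_i\bar y_i$, $H=\mathrm U(p+1,q;\mathbb F)\times\mathrm U(1;\mathbb F)$ is the stabilizer of $\mathbb F(0,\dots,0,1)^T$, $\mathbb X(p+1,q+1;\mathbb F)=G/H$; $K=\mathrm U(p+1;\mathbb F)\times\mathrm U(q+1;\mathbb F)$; $a_s$ is the identity except entries $(1,1)=(p+q+2,p+q+2)=\cosh s$, $(1,p+q+2)=(p+q+2,1)=\sinh s$. For $u\in\mathbb F^p$, $v=(v_q,\dots,v_1)\in\mathbb F^q$, $w\in\mathrm{Im}\mathbb F$,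 $N_{u,v,w}$ is the block matrix (blocks $1,p,q,1$) with rows $(-w,u,v,w)$, $(-\bar u^T,0,0,\bar u^T)$, $(\bar v^T,0,0,-\bar v^T)$, $(-w,u,v,w)$; for $p<q$, $\mathfrak n^*=\{N_{u,v,w}:v=(-\bar u',v'),u\in\mathbb F^p,v'\in\mathbb F^{q-p},w\in\mathrm{Im}\mathbb F\}$ ($\bar u'$ reversed), $N^*=\exp\mathfrak n^*$ with Lebesgue measure in the coordinates. $R^d_{p,q}f(g)=\int_{N^*}f(gn^*H)dn^*$ is the Radon transform for $\mathbb X(p+1,q+1;\mathbb F)$, and $R^1_{p',q'}$ the one for the real space $\mathbb X(p'+1,q'+1;\mathbb R)$ (with its own $a_s$). $\rho_{\mathfrak q}=\tfrac12(dp+dq+2(d-1))$, $\rho_1=\tfrac12(|dp-dq|+2(d-1))$, $\mathcal A^d_{p,q}f(s)=e^{\rho_1 s}R^d_{p,q}f(a_s)$. $\tilde\psi_\lambda$ denotes, on each space, the $K$-invariant function with $\tilde\psi_\lambda(ka_sH)=(\cosh s)^{-\lambda-\rho_{\mathfrak q}}$. Discrete series parameters: $\lambda=\tfrac12(dq-dp)-1+\mu_\lambda>0$, $\mu_\lambda\in2\mathbb Z$. *)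

theory Defs
  imports "HOL-Analysis.Analysis" "HOL-Probability.Probability"
begin

section \<open>Quaternions (the ambient division algebra containing R and C)\<close>

datatype quat = Quat (qre: real) (qi: real) (qj: real) (qk: real)

instantiation quat :: ring_1
begin
definition "0 = Quat 0 0 0 0"
definition "1 = Quat 1 0 0 0"
definition "x + y = Quat (qre x + qre y) (qi x + qi y) (qj x + qj y) (qk x + qk y)"
definition "x - y = Quat (qre x - qre y) (qi x - qi y) (qj x - qj y) (qk x - qk y)"
definition "- x = Quat (- qre x) (- qi x) (- qj x) (- qk x)"
definition "x * y = Quat
   (qre x * qre y - qi x * qi y - qj x * qj y - qk x * qk y)
   (qre x * qi y + qi x * qre y + qj x * qk y - qk x * qj y)
   (qre x * qj y - qi x * qk y + qj x * qre y + qk x * qi y)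
   (qre x * qk y + qi x * qj y - qj x * qi y + qk x * qre y)"
instance
  by standard (simp_all add: zero_quat_def one_quat_def plus_quat_def minus_quat_def
      uminus_quat_def times_quat_def algebra_simps)
end

definition qcnj :: "quat \<Rightarrow> quat" where
  "qcnj x = Quat (qre x) (- qi x) (- qj x) (- qk x)"

definition qsc :: "real \<Rightarrow> quat \<Rightarrow> quat" where
  "qsc r x = Quat (r * qre x) (r * qi x) (r * qj x) (r * qk x)"

definition qreal :: "real \<Rightarrow> quat" where
  "qreal r = Quat r 0 0 0"

text \<open>The field F (d = 1: R, d = 2: C, d = 4: H) as a subset of the quaternions.\<close>
definition inF :: "nat \<Rightarrow> quat \<Rightarrow> bool" where
  "inF d x \<longleftrightarrow> (d \<le> 1 \<longrightarrow> qi x = 0) \<and> (d \<le> 2 \<longrightarrow> qj x = 0 \<and> qk x = 0)"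

section \<open>Matrices over F (size n, 0-based indices, zero outside the range)\<close>

type_synonym qmat = "nat \<Rightarrow> nat \<Rightarrow> quat"

definition mmul :: "nat \<Rightarrow> qmat \<Rightarrow> qmat \<Rightarrow> qmat" where
  "mmul n A B = (\<lambda>i j. \<Sum>k<n. A i k * B k j)"

definition mid :: "nat \<Rightarrow> qmat" where
  "mid n = (\<lambda>i j. if i < n \<and> j = i then 1 else 0)"

definition mpow :: "nat \<Rightarrow> qmat \<Rightarrow> nat \<Rightarrow> qmat" where
  "mpow n A k = (mmul n A ^^ k) (mid n)"

text \<open>Matrix exponential; it is only applied to nilpotent n x n matrices, for which
  the exponential series terminates after the n-th power.\<close>
definition mexp_nil :: "nat \<Rightarrow> qmat \<Rightarrow> qmat" where
  "mexp_nil n A = (\<lambda>i j. \<Sum>k\<le>n. qsc (1 / fact k) (mpow n A k i j))"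

definition adj :: "qmat \<Rightarrow> qmat" where
  "adj A = (\<lambda>i j. qcnj (A j i))"

definition dimX :: "nat \<Rightarrow> nat \<Rightarrow> nat" where
  "dimX p q = p + q + 2"

definition Jm :: "nat \<Rightarrow> nat \<Rightarrow> qmat" where
  "Jm p q = (\<lambda>i j. if i = j \<and> i < dimX p q then (if i \<le> p then 1 else - 1) else 0)"

definition Gset :: "nat \<Rightarrow> nat \<Rightarrow> nat \<Rightarrow> qmat set" where
  "Gset d p q = {g. (\<forall>i j. (dimX p q \<le> i \<or> dimX p q \<le> j) \<longrightarrow> g i j = 0)
      \<and> (\<forall>i j. inF d (g i j))
      \<and> mmul (dimX p q) (mmul (dimX p q) (adj g) (Jm p q)) g = Jm p q}"

text \<open>K = U(p+1;F) x U(q+1;F): the block-diagonal elements of G.\<close>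
definition Kset :: "nat \<Rightarrow> nat \<Rightarrow> nat \<Rightarrow> qmat set" where
  "Kset d p q = {k \<in> Gset d p q. \<forall>i j. (i \<le> p \<and> p < j) \<or> (p < i \<and> j \<le> p) \<longrightarrow> k i j = 0}"

text \<open>H: stabilizer in G of the line F(0,...,0,1)^T.\<close>
definition Hset :: "nat \<Rightarrow> nat \<Rightarrow> nat \<Rightarrow> qmat set" where
  "Hset d p q = {h \<in> Gset d p q. \<forall>i < dimX p q - 1. h i (dimX p q - 1) = 0}"

definition amat :: "nat \<Rightarrow> nat \<Rightarrow> real \<Rightarrow> qmat" where
  "amat p q s = (\<lambda>i j. let n = dimX p q in
     if i < n \<and> j < n then
       (if (i = 0 \<or> i = n - 1) \<and> (j = 0 \<or> j = n - 1) then
          (if i = j then qreal (cosh s) else qreal (sinh s))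
        else if i = j then 1 else 0)
     else 0)"

text \<open>N_{u,v,w} with blocks of sizes 1, p, q, 1; u, v indexed positionally from 0.\<close>
definition Nmat :: "nat \<Rightarrow> nat \<Rightarrow> (nat \<Rightarrow> quat) \<Rightarrow> (nat \<Rightarrow> quat) \<Rightarrow> quat \<Rightarrow> qmat" where
  "Nmat p q u v w = (\<lambda>i j. let n = dimX p q in
     if i < n \<and> j < n then
       (if i = 0 \<or> i = n - 1 then
          (if j = 0 then - w
           else if j \<le> p then u (j - 1)
           else if j \<le> p + q then v (j - p - 1)
           else w)
        else if i \<le> p then
          (if j = 0 then - qcnj (u (i - 1)) else if j = n - 1 then qcnj (u (i - 1)) else 0)
        else
          (if j = 0 then qcnj (v (i - p - 1)) else if j = n - 1 then - qcnj (v (i - p - 1)) else 0))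
     else 0)"

text \<open>Real coordinates: an element of F is read off from d consecutive coordinates,
  an element of Im F from d - 1 consecutive coordinates.\<close>
definition qof :: "nat \<Rightarrow> (nat \<Rightarrow> real) \<Rightarrow> nat \<Rightarrow> quat" where
  "qof d y off = Quat (y off) (if 2 \<le> d then y (off + 1) else 0)
      (if 4 \<le> d then y (off + 2) else 0) (if 4 \<le> d then y (off + 3) else 0)"

definition imof :: "nat \<Rightarrow> (nat \<Rightarrow> real) \<Rightarrow> nat \<Rightarrow> quat" where
  "imof d y off = Quat 0 (if 2 \<le> d then y off else 0)
      (if 4 \<le> d then y (off + 1) else 0) (if 4 \<le> d then y (off + 2) else 0)"

definition ncoord :: "nat \<Rightarrow> nat \<Rightarrow> nat \<Rightarrow> nat" where
  "ncoord d p q = d * q + d - 1"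

definition u_of :: "nat \<Rightarrow> nat \<Rightarrow> (nat \<Rightarrow> real) \<Rightarrow> nat \<Rightarrow> quat" where
  "u_of d p y i = (if i < p then qof d y (d * i) else 0)"

definition v_of :: "nat \<Rightarrow> nat \<Rightarrow> nat \<Rightarrow> (nat \<Rightarrow> real) \<Rightarrow> nat \<Rightarrow> quat" where
  "v_of d p q y j = (if j < p then - qcnj (u_of d p y (p - 1 - j))
                     else if j < q then qof d y (d * p + d * (j - p)) else 0)"

definition nstar :: "nat \<Rightarrow> nat \<Rightarrow> nat \<Rightarrow> (nat \<Rightarrow> real) \<Rightarrow> qmat" where
  "nstar d p q y = mexp_nil (dimX p q)
     (Nmat p q (u_of d p y) (v_of d p q y) (imof d y (d * q)))"

definition Radon :: "nat \<Rightarrow> nat \<Rightarrow> nat \<Rightarrow> (qmat \<Rightarrow> real) \<Rightarrow> qmat \<Rightarrow> real" where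
  "Radon d p q f g =
     (\<integral>y. f (mmul (dimX p q) g (nstar d p q y)) \<partial>(Pi\<^sub>M {..<ncoord d p q} (\<lambda>_. lborel)))"

definition rho_q :: "nat \<Rightarrow> nat \<Rightarrow> nat \<Rightarrow> real" where
  "rho_q d p q = (real (d * p) + real (d * q) + 2 * (real d - 1)) / 2"

definition rho_1 :: "nat \<Rightarrow> nat \<Rightarrow> nat \<Rightarrow> real" where
  "rho_1 d p q = (\<bar>real (d * p) - real (d * q)\<bar> + 2 * (real d - 1)) / 2"

definition psi :: "nat \<Rightarrow> nat \<Rightarrow> nat \<Rightarrow> real \<Rightarrow> qmat \<Rightarrow> real" where
  "psi d p q lam g = (THE c. \<exists>k \<in> Kset d p q. \<exists>s. \<exists>h \<in> Hset d p q.
      g = mmul (dimX p q) (mmul (dimX p q) k (amat p q s)) h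
      \<and> c = cosh s powr (- lam - rho_q d p q))"

definition Aop :: "nat \<Rightarrow> nat \<Rightarrow> nat \<Rightarrow> (qmat \<Rightarrow> real) \<Rightarrow> real \<Rightarrow> real" where
  "Aop d p q f s = exp (rho_1 d p q * s) * Radon d p q f (amat p q s)"

end

theory Submission
  imports Defs
begin


lemma quat_eq_iff: "x = y \<longleftrightarrow> qre x = qre y \<and> qi x = qi y \<and> qj x = qj y \<and> qk x = qk y"
  by (cases x; cases y) auto

lemma quat_simps[simp]:
  "qre 0 = 0" "qi 0 = 0" "qj 0 = 0" "qk 0 = 0"
  "qre 1 = 1" "qi 1 = 0" "qj 1 = 0" "qk 1 = 0"
  "qre (x + y) = qre x + qre y" "qi (x + y) = qi x + qi y" "qj (x + y) = qj x + qj y" "qk (x + y) = qk x + qk y"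
  "qre (x - y) = qre x - qre y" "qi (x - y) = qi x - qi y" "qj (x - y) = qj x - qj y" "qk (x - y) = qk x - qk y"
  "qre (- x) = - qre x" "qi (- x) = - qi x" "qj (- x) = - qj x" "qk (- x) = - qk x"
  "qre (x * y) = qre x * qre y - qi x * qi y - qj x * qj y - qk x * qk y"
  "qi (x * y) = qre x * qi y + qi x * qre y + qj x * qk y - qk x * qj y"
  "qj (x * y) = qre x * qj y - qi x * qk y + qj x * qre y + qk x * qi y"
  "qk (x * y) = qre x * qk y + qi x * qj y - qj x * qi y + qk x * qre y"
  "qre (qcnj x) = qre x" "qi (qcnj x) = - qi x" "qj (qcnj x) = - qj x" "qk (qcnj x) = - qk x"
  "qre (qsc r x) = r * qre x" "qi (qsc r x) = r * qi x" "qj (qsc r x) = r * qj x" "qk (qsc r x) = r * qk x"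
  "qre (qreal r) = r" "qi (qreal r) = 0" "qj (qreal r) = 0" "qk (qreal r) = 0"
  by (simp_all add: zero_quat_def one_quat_def plus_quat_def minus_quat_def uminus_quat_def
      times_quat_def qcnj_def qsc_def qreal_def)

lemma quat_sum_simps[simp]:
  "qre (sum f A) = (\<Sum>a\<in>A. qre (f a))" "qi (sum f A) = (\<Sum>a\<in>A. qi (f a))"
  "qj (sum f A) = (\<Sum>a\<in>A. qj (f a))" "qk (sum f A) = (\<Sum>a\<in>A. qk (f a))"
  by (induction A rule: infinite_finite_induct; simp)+

definition qn :: "quat \<Rightarrow> real" where
  "qn x = qre x ^ 2 + qi x ^ 2 + qj x ^ 2 + qk x ^ 2"

lemma qn_nonneg[simp]: "0 \<le> qn x" by (simp add: qn_def)
lemma qn_eq_0: "qn x = 0 \<longleftrightarrow> x = 0"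
  by (simp add: qn_def quat_eq_iff) (smt (verit) sum_power2_eq_zero_iff zero_le_power2)

lemma qcnj_simps[simp]:
  "qcnj (x * y) = qcnj y * qcnj x" "qcnj (x + y) = qcnj x + qcnj y" "qcnj (x - y) = qcnj x - qcnj y"
  "qcnj (- x) = - qcnj x" "qcnj (qcnj x) = x" "qcnj 0 = 0" "qcnj 1 = 1" "qcnj (qreal r) = qreal r"
  "qcnj (qsc r x) = qsc r (qcnj x)"
  by (simp_all add: quat_eq_iff algebra_simps)

lemma qcnj_sum[simp]: "qcnj (sum f A) = (\<Sum>a\<in>A. qcnj (f a))"
  by (simp add: quat_eq_iff sum_negf)

lemma qcnj_eq_0[simp]: "qcnj x = 0 \<longleftrightarrow> x = 0" by (auto simp: quat_eq_iff)

lemma qcnj_mult_self: "qcnj x * x = qreal (qn x)" "x * qcnj x = qreal (qn x)"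
  by (simp_all add: quat_eq_iff qn_def power2_eq_square algebra_simps)

lemma qreal_comm: "qreal r * x = x * qreal r" by (simp add: quat_eq_iff)
lemma qsc_def': "qsc r x = qreal r * x" by (simp add: quat_eq_iff)
lemma qsc_def'': "qsc r x = x * qreal r" by (simp add: quat_eq_iff)
lemma qreal_simps[simp]: "qreal 0 = 0" "qreal 1 = 1" "qreal (a + b) = qreal a + qreal b"
  "qreal (a - b) = qreal a - qreal b" "qreal (a * b) = qreal a * qreal b" "qreal (- a) = - qreal a"
  by (simp_all add: quat_eq_iff)
lemma qreal_inj[simp]: "qreal a = qreal b \<longleftrightarrow> a = b" by (simp add: quat_eq_iff)
lemma qreal_sum: "qreal (sum f A) = (\<Sum>a\<in>A. qreal (f a))" by (simp add: quat_eq_iff)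
lemma qreal_of_nat: "qreal (of_nat n) = of_nat n"
  by (induction n) (simp_all add: quat_eq_iff)
lemma qn_mult: "qn (x * y) = qn x * qn y"
  by (simp add: qn_def power2_eq_square algebra_simps)
lemma qn_qcnj[simp]: "qn (qcnj x) = qn x" by (simp add: qn_def)
lemma qn_qreal[simp]: "qn (qreal r) = r^2" by (simp add: qn_def)
lemma qn_uminus[simp]: "qn (- x) = qn x" by (simp add: qn_def)
lemma qsc_simps[simp]: "qsc 1 x = x" "qsc 0 x = 0" "qsc r 0 = 0" "qsc a (qsc b x) = qsc (a*b) x"
  "qsc r (x + y) = qsc r x + qsc r y"
  by (simp_all add: quat_eq_iff algebra_simps)
lemma qsc_mult: "qsc r x * y = qsc r (x * y)" "x * qsc r y = qsc r (x * y)"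
  by (simp_all add: quat_eq_iff algebra_simps)

lemma inF_simps:
  "inF d 0" "inF d 1" "inF d (qreal r)"
  "inF d x \<Longrightarrow> inF d y \<Longrightarrow> inF d (x + y)"
  "inF d x \<Longrightarrow> inF d y \<Longrightarrow> inF d (x - y)"
  "inF d x \<Longrightarrow> inF d y \<Longrightarrow> inF d (x * y)"
  "inF d x \<Longrightarrow> inF d (- x)"
  "inF d x \<Longrightarrow> inF d (qcnj x)"
  "inF d x \<Longrightarrow> inF d (qsc r x)"
  by (auto simp: inF_def)

lemma inF_sum: "(\<And>a. a \<in> A \<Longrightarrow> inF d (f a)) \<Longrightarrow> inF d (sum f A)"
  by (induction A rule: infinite_finite_induct) (auto intro: inF_simps)


definition supp :: "nat \<Rightarrow> qmat \<Rightarrow> bool" where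
  "supp n A \<longleftrightarrow> (\<forall>i j. n \<le> i \<or> n \<le> j \<longrightarrow> A i j = 0)"

definition madd :: "qmat \<Rightarrow> qmat \<Rightarrow> qmat" where "madd A B = (\<lambda>i j. A i j + B i j)"
definition msub :: "qmat \<Rightarrow> qmat \<Rightarrow> qmat" where "msub A B = (\<lambda>i j. A i j - B i j)"
definition mneg :: "qmat \<Rightarrow> qmat" where "mneg A = (\<lambda>i j. - A i j)"
definition msc :: "real \<Rightarrow> qmat \<Rightarrow> qmat" where "msc r A = (\<lambda>i j. qsc r (A i j))"
definition mzero :: qmat where "mzero = (\<lambda>i j. 0)"

lemma mmul_assoc: "mmul n (mmul n A B) C = mmul n A (mmul n B C)"
  by (auto simp: mmul_def sum_distrib_left sum_distrib_right mult.assoc intro!: ext sum.swap)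

lemma adj_mmul: "adj (mmul n A B) = mmul n (adj B) (adj A)"
  by (auto simp: mmul_def adj_def intro!: ext)

lemma adj_adj[simp]: "adj (adj A) = A" by (simp add: adj_def)
lemma adj_mid[simp]: "adj (mid n) = mid n" by (auto simp: adj_def mid_def intro!: ext)
lemma adj_madd: "adj (madd A B) = madd (adj A) (adj B)" by (simp add: adj_def madd_def)
lemma adj_msub: "adj (msub A B) = msub (adj A) (adj B)" by (simp add: adj_def msub_def)
lemma adj_mneg: "adj (mneg A) = mneg (adj A)" by (simp add: adj_def mneg_def)
lemma adj_msc: "adj (msc r A) = msc r (adj A)" by (simp add: adj_def msc_def)
lemma adj_mzero[simp]: "adj mzero = mzero" by (simp add: adj_def mzero_def)
lemma adj_Jm[simp]: "adj (Jm p q) = Jm p q" by (auto simp: adj_def Jm_def intro!: ext)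

lemma mmul_madd_left: "mmul n (madd A B) C = madd (mmul n A C) (mmul n B C)"
  by (simp add: mmul_def madd_def distrib_right sum.distrib)
lemma mmul_madd_right: "mmul n A (madd B C) = madd (mmul n A B) (mmul n A C)"
  by (simp add: mmul_def madd_def distrib_left sum.distrib)
lemma mmul_msub_left: "mmul n (msub A B) C = msub (mmul n A C) (mmul n B C)"
  by (simp add: mmul_def msub_def left_diff_distrib sum_subtractf)
lemma mmul_msub_right: "mmul n A (msub B C) = msub (mmul n A B) (mmul n A C)"
  by (simp add: mmul_def msub_def right_diff_distrib sum_subtractf)
lemma mmul_mneg_left: "mmul n (mneg A) C = mneg (mmul n A C)"
  by (simp add: mmul_def mneg_def sum_negf)
lemma mmul_mneg_right: "mmul n A (mneg C) = mneg (mmul n A C)"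
  by (simp add: mmul_def mneg_def sum_negf)
lemma mmul_msc_left: "mmul n (msc r A) C = msc r (mmul n A C)"
  by (simp add: mmul_def msc_def qsc_def' sum_distrib_left mult.assoc)
lemma mmul_msc_right: "mmul n A (msc r C) = msc r (mmul n A C)"
  by (simp add: mmul_def msc_def qsc_def'' sum_distrib_right mult.assoc)
lemma mmul_mzero[simp]: "mmul n mzero A = mzero" "mmul n A mzero = mzero"
  by (simp_all add: mmul_def mzero_def)

lemma mmul_mid_left: "supp n A \<Longrightarrow> mmul n (mid n) A = A"
proof (intro ext)
  fix i j assume A: "supp n A"
  show "mmul n (mid n) A i j = A i j"
  proof (cases "i < n")
    case True
    have "mmul n (mid n) A i j = (\<Sum>k<n. if k = i then A i j else 0)"
      unfolding mmul_def mid_def using True by (intro sum.cong) auto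
    then show ?thesis using True by simp
  qed (use A in \<open>auto simp: mmul_def mid_def supp_def\<close>)
qed
lemma mmul_mid_right: "supp n A \<Longrightarrow> mmul n A (mid n) = A"
proof (intro ext)
  fix i j assume A: "supp n A"
  show "mmul n A (mid n) i j = A i j"
  proof (cases "j < n")
    case True
    have "mmul n A (mid n) i j = (\<Sum>k<n. if k = j then A i j else 0)"
      unfolding mmul_def mid_def using True by (intro sum.cong) auto
    then show ?thesis using True by simp
  qed (use A in \<open>auto simp: mmul_def mid_def supp_def\<close>)
qed

lemma supp_mmul: "supp n A \<Longrightarrow> supp n B \<Longrightarrow> supp n (mmul n A B)"
  by (auto simp: supp_def mmul_def)
lemma supp_mid[simp]: "supp n (mid n)" by (simp add: supp_def mid_def)
lemma supp_adj: "supp n A \<Longrightarrow> supp n (adj A)" by (auto simp: supp_def adj_def)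
lemma supp_madd: "supp n A \<Longrightarrow> supp n B \<Longrightarrow> supp n (madd A B)" by (simp add: supp_def madd_def)
lemma supp_msc: "supp n A \<Longrightarrow> supp n (msc r A)" by (simp add: supp_def msc_def)
lemma supp_Jm[simp]: "supp (dimX p q) (Jm p q)" by (simp add: supp_def Jm_def)

lemma madd_assoc: "madd (madd A B) C = madd A (madd B C)" by (simp add: madd_def add.assoc)
lemma madd_mzero[simp]: "madd A mzero = A" "madd mzero A = A" by (simp_all add: madd_def mzero_def)


definition sg :: "nat \<Rightarrow> nat \<Rightarrow> quat" where "sg p j = (if j \<le> p then 1 else - 1)"

lemma Jm_right: "mmul (dimX p q) X (Jm p q) i j = (if j < dimX p q then X i j * sg p j else 0)"
proof -
  have "mmul (dimX p q) X (Jm p q) i j = (\<Sum>k<dimX p q. if k = j then X i j * sg p j else 0)"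
    unfolding mmul_def Jm_def sg_def by (intro sum.cong) auto
  then show ?thesis by simp
qed

lemma Jm_left: "mmul (dimX p q) (Jm p q) X i j = (if i < dimX p q then sg p i * X i j else 0)"
proof -
  have "mmul (dimX p q) (Jm p q) X i j = (\<Sum>k<dimX p q. if k = i then sg p i * X i j else 0)"
    unfolding mmul_def Jm_def sg_def by (intro sum.cong) auto
  then show ?thesis by simp
qed

lemma N_lie:
  assumes "qre w = 0"
  shows "mmul (dimX p q) (adj (Nmat p q u v w)) (Jm p q) = mneg (mmul (dimX p q) (Jm p q) (Nmat p q u v w))"
proof (intro ext)
  fix i j
  have cw: "qcnj w = - w" using assms by (simp add: quat_eq_iff)
  show "mmul (dimX p q) (adj (Nmat p q u v w)) (Jm p q) i j = mneg (mmul (dimX p q) (Jm p q) (Nmat p q u v w)) i j"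
    unfolding Jm_right Jm_left mneg_def adj_def
    by (auto simp: Nmat_def Let_def dimX_def sg_def cw)
qed


lemma aux_neg: "a + b = - c \<Longrightarrow> - a - b = (c::'a::ab_group_add)"
proof -
  assume "a + b = - c"
  then have "- (a + b) = c" by (metis minus_minus)
  then show ?thesis by (simp add: algebra_simps)
qed

lemma sum_lessThan_add: "(\<Sum>k<(a::nat)+b. F k) = (\<Sum>k<a. F k) + (\<Sum>k<b. F (k + a))"
  by (induction b) (simp_all add: add_ac)

lemma sum_split4:
  "(\<Sum>k<dimX p q. F k) = F 0 + F (Suc (p+q)) + (\<Sum>k<p. F (k+1)) + (\<Sum>k<q. F (k+p+1))"
proof -
  have "dimX p q = Suc (p + q + 1)" by (simp add: dimX_def)
  then have "(\<Sum>k<dimX p q. F k) = (\<Sum>k<p+q+1. F k) + F (p+q+1)" by simp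
  also have "(\<Sum>k<p+q+1. F k) = F 0 + (\<Sum>k<p+q. F (Suc k))"
    using sum.lessThan_Suc_shift[of F "p+q"] by simp
  also have "(\<Sum>k<p+q. F (Suc k)) = (\<Sum>k<p. F (k+1)) + (\<Sum>k<q. F (k+p+1))"
    by (subst sum_lessThan_add) (simp add: add.commute add.left_commute)
  finally show ?thesis by (simp add: dimX_def algebra_simps)
qed

context fixes p q :: nat and u v :: "nat \<Rightarrow> quat" and w :: quat
begin

abbreviation "NN \<equiv> Nmat p q u v w"
abbreviation "nn \<equiv> dimX p q"

lemma N_supp: "supp nn NN" by (simp add: supp_def Nmat_def Let_def)
lemma N_rowE: "NN (Suc (p+q)) j = NN 0 j" by (simp add: Nmat_def Let_def dimX_def)
lemma N_col: "NN i (Suc (p+q)) = - NN i 0" by (auto simp: Nmat_def Let_def dimX_def)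
lemma N_midmid: "0 < i \<Longrightarrow> i < Suc (p+q) \<Longrightarrow> 0 < j \<Longrightarrow> j < Suc (p+q) \<Longrightarrow> NN i j = 0"
  by (auto simp: Nmat_def Let_def dimX_def)
lemma N_0u: "k < p \<Longrightarrow> NN 0 (Suc k) = u k" by (auto simp: Nmat_def Let_def dimX_def)
lemma N_0v: "k < q \<Longrightarrow> NN 0 (Suc (k+p)) = v k" by (auto simp: Nmat_def Let_def dimX_def)
lemma N_u0: "k < p \<Longrightarrow> NN (Suc k) 0 = - qcnj (u k)" by (auto simp: Nmat_def Let_def dimX_def)
lemma N_v0: "k < q \<Longrightarrow> NN (Suc (k+p)) 0 = qcnj (v k)" by (auto simp: Nmat_def Let_def dimX_def)
lemma N_00: "NN 0 0 = - w" by (auto simp: Nmat_def Let_def dimX_def)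

definition cc :: quat where
  "cc = qreal ((\<Sum>k<p. qn (u k)) - (\<Sum>k<q. qn (v k)))"

lemma NN_sq: "mmul nn NN NN i j =
  (if (i = 0 \<or> i = Suc (p+q)) \<and> (j = 0 \<or> j = Suc (p+q)) then (if j = 0 then - cc else cc) else 0)"
proof -
  have F0: "NN i 0 * NN 0 j + NN i (Suc (p+q)) * NN (Suc (p+q)) j = 0"
    unfolding N_rowE N_col by simp
  have "mmul nn NN NN i j = (\<Sum>k<p. NN i (k+1) * NN (k+1) j) + (\<Sum>k<q. NN i (k+p+1) * NN (k+p+1) j)"
    unfolding mmul_def sum_split4 using F0 by (simp add: add.assoc)
  also have "\<dots> = (if (i = 0 \<or> i = Suc (p+q)) \<and> (j = 0 \<or> j = Suc (p+q)) then (if j = 0 then - cc else cc) else 0)"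
  proof (cases "(i = 0 \<or> i = Suc (p+q)) \<and> (j = 0 \<or> j = Suc (p+q))")
    case True
    then have i: "NN i k = NN 0 k" for k using N_rowE by auto
    have H: "(\<Sum>k<p. NN 0 (k+1) * NN (k+1) 0) + (\<Sum>k<q. NN 0 (k+p+1) * NN (k+p+1) 0) = - cc"
      by (simp add: N_0u N_u0 N_0v N_v0 cc_def qcnj_mult_self qreal_sum sum_negf)
    then have "- (\<Sum>k<p. NN 0 (k+1) * NN (k+1) 0) - (\<Sum>k<q. NN 0 (k+p+1) * NN (k+p+1) 0) = cc"
      by (rule aux_neg)
    moreover note H moreover have "NN k (Suc (p+q)) = - NN k 0" for k by (rule N_col)
    ultimately show ?thesis using True i
      by (auto simp: sum_negf dimX_def)
  next
    case False
    then consider "i \<noteq> 0" "i \<noteq> Suc (p+q)" | "j \<noteq> 0" "j \<noteq> Suc (p+q)" by fastforce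
    then show ?thesis
    proof cases
      case 1
      show ?thesis
      proof (cases "i < nn")
        case True
        then have "0 < i" "i < Suc (p+q)" using 1 by (auto simp: dimX_def)
        then show ?thesis using False by (simp add: N_midmid)
      next
        case F2: False
        then have "NN i k = 0" for k using N_supp by (simp add: supp_def)
        then show ?thesis using 1 by simp
      qed
    next
      case 2
      show ?thesis
      proof (cases "j < nn")
        case True
        then have "0 < j" "j < Suc (p+q)" using 2 by (auto simp: dimX_def)
        then show ?thesis using False by (simp add: N_midmid)
      next
        case F2: False
        then have "NN k j = 0" for k using N_supp by (simp add: supp_def)
        then show ?thesis using 2 by simp
      qed
    qed
  qed
  finally show ?thesis .
qed

lemma NN_cube: "mmul nn NN (mmul nn NN NN) = mzero"
proof (intro ext)
  fix i j
  have "mmul nn NN (mmul nn NN NN) i j = NN i 0 * mmul nn NN NN 0 j + NN i (Suc (p+q)) * mmul nn NN NN (Suc (p+q)) j"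
    unfolding mmul_def[of nn NN "mmul nn NN NN"] sum_split4 NN_sq by (simp add: dimX_def)
  also have "\<dots> = 0" by (simp add: NN_sq N_col)
  finally show "mmul nn NN (mmul nn NN NN) i j = mzero i j" by (simp add: mzero_def)
qed

end


lemma mpow_0: "mpow n A 0 = mid n" by (simp add: mpow_def)
lemma mpow_Suc: "mpow n A (Suc k) = mmul n A (mpow n A k)" by (simp add: mpow_def)

context fixes p q :: nat and u v :: "nat \<Rightarrow> quat" and w :: quat
begin

abbreviation "Nm \<equiv> Nmat p q u v w"
abbreviation "nd \<equiv> dimX p q"
abbreviation "N2 \<equiv> mmul nd Nm Nm"
definition "EE = madd (madd (mid nd) Nm) (msc (1/2) N2)"

lemma mpow_ge3: "3 \<le> k \<Longrightarrow> mpow nd Nm k = mzero"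
proof (induction k rule: dec_induct)
  case base
  have "mpow nd Nm 3 = mmul nd Nm N2"
    by (simp add: numeral_3_eq_3 mpow_Suc mpow_0 mmul_mid_right N_supp)
  then show ?case by (simp add: NN_cube)
next
  case (step k) then show ?case by (simp add: mpow_Suc)
qed

lemma mexp_EE: "mexp_nil nd Nm = EE"
proof (intro ext)
  fix i j
  have n2: "2 \<le> nd" by (simp add: dimX_def)
  have "mexp_nil nd Nm i j = (\<Sum>k<3. qsc (1 / fact k) (mpow nd Nm k i j))"
    unfolding mexp_nil_def
  proof (rule sum.mono_neutral_right)
    show "{..<3} \<subseteq> {..nd}" using n2 by auto
  qed (auto simp: mpow_ge3 mzero_def)
  also have "\<dots> = EE i j"
    using N_supp
    by (simp add: numeral_3_eq_3 mpow_Suc mpow_0 mmul_mid_right EE_def madd_def msc_def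
        mmul_mid_left)
  finally show "mexp_nil nd Nm i j = EE i j" .
qed

lemma supp_EE: "supp nd EE"
  unfolding EE_def by (intro supp_madd supp_msc supp_mmul supp_mid N_supp)

lemma EE_G:
  assumes w: "qre w = 0"
  shows "mmul nd (mmul nd (adj EE) (Jm p q)) EE = Jm p q"
proof -
  let ?J = "Jm p q"
  let ?aN = "adj Nm"
  have lie: "mmul nd ?aN ?J = mneg (mmul nd ?J Nm)" by (rule N_lie[OF w])
  have J1: "mmul nd (mid nd) ?J = ?J" "mmul nd ?J (mid nd) = ?J"
    by (simp_all add: mmul_mid_left mmul_mid_right)
  have sq: "mmul nd (mmul nd ?aN ?aN) ?J = mmul nd ?J N2"
    by (simp add: mmul_assoc lie mmul_mneg_right mmul_mneg_left
        flip: mmul_assoc[of nd ?aN ?J Nm])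
      (simp add: mneg_def mmul_assoc)
  define FF where "FF = madd (msub (mid nd) Nm) (msc (1/2) N2)"
  have A: "mmul nd (adj EE) ?J = mmul nd ?J FF"
  proof -
    have "adj EE = madd (madd (mid nd) ?aN) (msc (1/2) (mmul nd ?aN ?aN))"
      by (simp add: EE_def adj_madd adj_msc adj_mmul)
    then have "mmul nd (adj EE) ?J = madd (madd ?J (mneg (mmul nd ?J Nm))) (msc (1/2) (mmul nd ?J N2))"
      by (simp add: mmul_madd_left mmul_msc_left J1 lie sq)
    also have "\<dots> = mmul nd ?J FF"
      by (simp add: FF_def mmul_madd_right mmul_msub_right mmul_msc_right J1)
        (simp add: madd_def msub_def mneg_def)
    finally show ?thesis .
  qed
  have N3: "mmul nd Nm N2 = mzero" by (rule NN_cube)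
  have N3': "mmul nd N2 Nm = mzero" by (simp add: mmul_assoc NN_cube)
  have N4: "mmul nd N2 N2 = mzero" by (simp add: mmul_assoc N3[unfolded mmul_assoc[symmetric]] N3)
  have B: "mmul nd FF EE = mid nd"
  proof -
    have NE: "mmul nd Nm EE = madd Nm N2"
      by (simp add: EE_def mmul_madd_right mmul_msc_right mmul_mid_right N_supp N3)
        (simp add: msc_def mzero_def madd_def)
    have N2E: "mmul nd N2 EE = N2"
      by (simp add: EE_def mmul_madd_right mmul_msc_right mmul_mid_right supp_mmul N_supp N3' N4)
        (simp add: msc_def mzero_def madd_def)
    have "mmul nd FF EE = madd (msub EE (madd Nm N2)) (msc (1/2) N2)"
      by (simp add: FF_def mmul_madd_left mmul_msub_left mmul_msc_left mmul_mid_left supp_EE NE N2E)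
    also have "\<dots> = mid nd"
      by (auto simp: EE_def madd_def msub_def msc_def quat_eq_iff intro!: ext)
    finally show ?thesis .
  qed
  show ?thesis
    by (simp add: A mmul_assoc B mmul_mid_right)
qed

end


lemma qn_zero[simp]: "qn 0 = 0" by (simp add: qn_def)
lemma qn_one[simp]: "qn 1 = 1" by (simp add: qn_def)

lemma qn_diff: "qn (x - y) = qn x + qn y - 2 * qre (qcnj x * y)"
  by (simp add: qn_def power2_eq_square algebra_simps)

lemma qn_qsc: "qn (qsc r x) = r^2 * qn x"
  by (simp add: qn_def power_mult_distrib algebra_simps)

lemma qn_sum_zero: "finite A \<Longrightarrow> (\<Sum>i\<in>A. qn (f i)) = 0 \<Longrightarrow> i \<in> A \<Longrightarrow> f i = 0"
  using sum_nonneg_eq_0_iff[of A "\<lambda>i. qn (f i)"] by (simp add: qn_eq_0)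

lemma unit_map:
  fixes b :: "nat \<Rightarrow> quat" and B :: "nat set"
  assumes B: "B \<subseteq> {..<n}" and i0: "i0 \<in> B"
    and bB: "\<And>i. i \<notin> B \<Longrightarrow> b i = 0"
    and bn: "(\<Sum>i<n. qn (b i)) = 1"
    and bF: "\<And>i. inF d (b i)"
  shows "\<exists>U. supp n U \<and> (\<forall>i j. inF d (U i j)) \<and> mmul n (adj U) U = mid n \<and> mmul n U (adj U) = mid n
     \<and> (\<forall>i j. i \<notin> B \<or> j \<notin> B \<longrightarrow> U i j = mid n i j) \<and> (\<forall>i. U i i0 = b i)"
proof -
  have i0n: "i0 < n" using B i0 by auto
  have bge: "i \<ge> n \<Longrightarrow> b i = 0" for i using B bB by (meson lessThan_iff not_le subsetD)
  define s where "s = sqrt (qn (b i0))"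
  define \<beta> where "\<beta> = (if b i0 = 0 then 1 else qsc (1 / s) (b i0))"
  have s0: "s = 0 \<longleftrightarrow> b i0 = 0" by (simp add: s_def qn_eq_0)
  have qb: "qcnj \<beta> * \<beta> = 1" "\<beta> * qcnj \<beta> = 1"
  proof -
    have "qn \<beta> = 1"
    proof (cases "b i0 = 0")
      case False
      then have "s > 0" using s0 s_def by (simp add: order_less_le)
      have "s^2 = qn (b i0)" by (simp add: s_def)
      then show ?thesis using False \<open>s > 0\<close>
        by (simp add: \<beta>_def qn_qsc power_divide qn_eq_0)
    qed (simp add: \<beta>_def qn_def)
    then show "qcnj \<beta> * \<beta> = 1" "\<beta> * qcnj \<beta> = 1" by (simp_all add: qcnj_mult_self)
  qed
  have cb: "qcnj \<beta> * b i0 = qreal s"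
  proof (cases "b i0 = 0")
    case False
    then have "s > 0" using s0 s_def by (simp add: order_less_le)
    have "qcnj \<beta> * b i0 = qsc (1/s) (qcnj (b i0) * b i0)" by (simp add: \<beta>_def False qsc_mult)
    also have "qcnj (b i0) * b i0 = qreal (s^2)" by (simp add: qcnj_mult_self s_def)
    also have "qsc (1/s) (qreal (s^2)) = qreal s" using \<open>s > 0\<close>
      by (simp add: quat_eq_iff power2_eq_square)
    finally show ?thesis .
  qed (simp add: \<beta>_def s_def)
  have cb': "qcnj (b i0) * \<beta> = qreal s"
    using arg_cong[OF cb, of qcnj] by simp
  define a where "a i = (if i = i0 then \<beta> else 0)" for i
  define v where "v i = a i - b i" for i
  define nv where "nv = (\<Sum>i<n. qn (v i))"
  define c where "c = 2 / nv"
  define V where "V = (\<lambda>i j. v i * qcnj (v j))"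
  define H where "H = msub (mid n) (msc c V)"
  define D where "D = (\<lambda>i j. if i = j \<and> i < n then (if i = i0 then \<beta> else 1) else (0::quat))"
  define U where "U = mmul n H D"
  have vB: "i \<notin> B \<Longrightarrow> v i = 0" for i using bB i0 by (auto simp: v_def a_def)
  have vge: "i \<ge> n \<Longrightarrow> v i = 0" for i using vB B by (meson lessThan_iff not_le subsetD)
  have suppV: "supp n V" by (simp add: supp_def V_def vge)
  have VV: "mmul n V V = msc nv V"
  proof (intro ext)
    fix i j
    have "mmul n V V i j = v i * (\<Sum>k<n. qcnj (v k) * v k) * qcnj (v j)"
      by (simp add: mmul_def V_def sum_distrib_left sum_distrib_right mult.assoc)
    also have "(\<Sum>k<n. qcnj (v k) * v k) = qreal nv"
      by (simp add: nv_def qcnj_mult_self qreal_sum)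
    finally show "mmul n V V i j = msc nv V i j"
      by (simp add: msc_def V_def qsc_def'' qreal_comm mult.assoc)
  qed
  have c2: "c * c * nv = 2 * c" by (cases "nv = 0") (simp_all add: c_def)
  have adjV: "adj V = V" by (simp add: adj_def V_def)
  have adjH: "adj H = H" by (simp add: H_def adj_msub adj_msc adjV)
  have suppH: "supp n H" by (simp add: H_def supp_def msub_def msc_def mid_def suppV[unfolded supp_def])
  have HH: "mmul n H H = mid n"
    unfolding H_def
    by (simp add: mmul_msub_left mmul_msub_right mmul_msc_left mmul_msc_right mmul_mid_left
        mmul_mid_right suppV supp_msc VV)
      (cases "nv = 0"; auto simp: msub_def msc_def quat_eq_iff c_def field_simps intro!: ext)
  have suppD: "supp n D" by (simp add: supp_def D_def)
  have Dcol: "mmul n X D i j = (if j < n then X i j * (if j = i0 then \<beta> else 1) else 0)" for X i j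
  proof -
    have "mmul n X D i j = (\<Sum>k<n. if k = j then X i j * (if j = i0 then \<beta> else 1) else 0)"
      unfolding mmul_def D_def by (intro sum.cong) auto
    then show ?thesis by simp
  qed
  have Drow: "mmul n D X i j = (if i < n then (if i = i0 then \<beta> else 1) * X i j else 0)" for X i j
  proof -
    have "mmul n D X i j = (\<Sum>k<n. if k = i then (if i = i0 then \<beta> else 1) * X i j else 0)"
      unfolding mmul_def D_def by (intro sum.cong) auto
    then show ?thesis by simp
  qed
  have DD: "mmul n (adj D) D = mid n" "mmul n D (adj D) = mid n"
     apply (intro ext) apply (simp only: Dcol) apply (auto simp: adj_def D_def mid_def qb)[1]
     apply (intro ext) apply (simp only: Drow) apply (auto simp: adj_def D_def mid_def qb)[1]
    done
  have U1: "mmul n (adj U) U = mid n"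
  proof -
    have "mmul n (adj U) U = mmul n (mmul n (adj D) H) (mmul n H D)"
      unfolding U_def adj_mmul adjH ..
    also have "\<dots> = mmul n (adj D) (mmul n (mmul n H H) D)"
      by (simp only: mmul_assoc)
    also have "\<dots> = mid n" by (simp add: HH mmul_mid_left suppD DD)
    finally show ?thesis .
  qed
  have U2: "mmul n U (adj U) = mid n"
  proof -
    have "mmul n U (adj U) = mmul n (mmul n H D) (mmul n (adj D) H)"
      unfolding U_def adj_mmul adjH ..
    also have "\<dots> = mmul n H (mmul n (mmul n D (adj D)) H)"
      by (simp only: mmul_assoc)
    also have "\<dots> = mid n" by (simp add: HH mmul_mid_left suppH DD)
    finally show ?thesis .
  qed
  have suppU: "supp n U" unfolding U_def by (intro supp_mmul suppH suppD)
  have aF: "inF d (a i)" for i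
    using bF[of i0] by (auto simp: a_def \<beta>_def intro: inF_simps)
  have vF: "inF d (v i)" for i unfolding v_def by (intro inF_simps aF bF)
  have HF: "inF d (H i j)" for i j
    by (auto simp: H_def msub_def msc_def V_def mid_def intro!: inF_simps vF)
  have UF: "inF d (U i j)" for i j
    unfolding U_def Dcol using HF aF[of i0] by (auto simp: a_def intro: inF_simps)
  have Ublk: "U i j = mid n i j" if "i \<notin> B \<or> j \<notin> B" for i j
  proof -
    have "V i j = 0" using that vB by (auto simp: V_def)
    then have "H i j = mid n i j" by (simp add: H_def msub_def msc_def)
    moreover have "j = i0 \<Longrightarrow> i \<notin> B" using that i0 by auto
    ultimately show ?thesis unfolding U_def Dcol using that i0
      by (auto simp: mid_def)
  qed
  have Ucol: "U i i0 = b i" for i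
  proof -
    have nv2: "nv = 2 * (1 - s)"
    proof -
      have "nv = (\<Sum>i<n. qn (a i)) + (\<Sum>i<n. qn (b i)) - 2 * (\<Sum>i<n. qre (qcnj (a i) * b i))"
        by (simp add: nv_def v_def qn_diff sum.distrib sum_subtractf sum_distrib_left)
      also have "(\<Sum>i<n. qn (a i)) = qn \<beta>"
        by (simp add: a_def i0n if_distrib[of qn] cong: if_cong)
      also have "qn \<beta> = 1" using qb(1) by (simp add: qcnj_mult_self quat_eq_iff)
      also have "(\<Sum>i<n. qre (qcnj (a i) * b i)) = s"
      proof -
        have r: "qre (qcnj \<beta> * b i0) = s" using arg_cong[OF cb, of qre] by simp
        have "(\<Sum>i<n. qre (qcnj (a i) * b i)) = (\<Sum>i<n. if i = i0 then s else 0)"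
          by (intro sum.cong refl) (use r in \<open>auto simp: a_def\<close>)
        then show ?thesis using i0n by simp
      qed
      finally show ?thesis using bn by simp
    qed
    have "U i i0 = H i i0 * \<beta>" unfolding U_def Dcol using i0n by simp
    also have "\<dots> = a i - qsc c (v i * (qcnj (v i0) * \<beta>))"
      by (simp add: H_def msub_def msc_def V_def mid_def a_def i0n left_diff_distrib qsc_mult mult.assoc)
    also have "qcnj (v i0) * \<beta> = qreal (1 - s)"
      by (simp add: v_def a_def left_diff_distrib qb cb')
    finally have U: "U i i0 = a i - qsc c (v i * qreal (1 - s))" .
    show ?thesis
    proof (cases "nv = 0")
      case True
      then have "v k = 0" if "k < n" for k
        using qn_sum_zero[of "{..<n}" v k] that by (simp add: nv_def)
      then have "v k = 0" for k using vge by (cases "k < n") auto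
      then show ?thesis using U True by (simp add: c_def v_def)
    next
      case False
      then have "1 - s \<noteq> 0" using nv2 by simp
      then have "qsc c (v i * qreal (1 - s)) = v i"
        unfolding c_def nv2 by (simp add: quat_eq_iff field_simps)
      then show ?thesis using U by (simp add: v_def)
    qed
  qed
  show ?thesis
    by (intro exI[of _ U] conjI allI impI suppU UF U1 U2 Ublk Ucol) auto
qed


abbreviation "lst p q \<equiv> Suc (p + q)"

lemma dimX_lst: "dimX p q = Suc (lst p q)" by (simp add: dimX_def)

lemma sum_two:
  fixes A B :: "'a::comm_monoid_add" and a b n :: nat
  assumes "a \<noteq> b" "a < n" "b < n"
  shows "(\<Sum>k<n. if k = a then A else if k = b then B else 0) = A + B"
proof -
  have "(\<lambda>k. if k = a then A else if k = b then B else 0) = (\<lambda>k. (if k = a then A else 0) + (if k = b then B else 0))"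
    using assms by auto
  then have "(\<Sum>k<n. if k = a then A else if k = b then B else 0) = (\<Sum>k<n. (if k = a then A else 0) + (if k = b then B else 0))"
    by metis
  also have "\<dots> = A + B" using assms by (simp add: sum.distrib sum.delta sum.delta')
  finally show ?thesis .
qed

lemma amat_left: "mmul (dimX p q) (amat p q s) X i j =
  (if i < dimX p q then
     (if i = 0 then qreal (cosh s) * X 0 j + qreal (sinh s) * X (lst p q) j
      else if i = lst p q then qreal (sinh s) * X 0 j + qreal (cosh s) * X (lst p q) j
      else X i j) else 0)"
proof (cases "i = 0 \<or> i = lst p q")
  case True
  have "mmul (dimX p q) (amat p q s) X i j
     = (\<Sum>k<dimX p q. if k = 0 then (if i = 0 then qreal (cosh s) else qreal (sinh s)) * X 0 j
          else if k = lst p q then (if i = 0 then qreal (sinh s) else qreal (cosh s)) * X (lst p q) j else 0)"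
    unfolding mmul_def using True by (intro sum.cong refl) (auto simp: amat_def Let_def dimX_def)
  also have "\<dots> = (if i = 0 then qreal (cosh s) else qreal (sinh s)) * X 0 j
      + (if i = 0 then qreal (sinh s) else qreal (cosh s)) * X (lst p q) j"
    by (rule sum_two) (auto simp: dimX_def)
  finally show ?thesis using True by (auto simp: dimX_def)
next
  case False
  have "mmul (dimX p q) (amat p q s) X i j = (\<Sum>k<dimX p q. if k = i then X i j else 0)"
    unfolding mmul_def using False by (intro sum.cong refl) (auto simp: amat_def Let_def dimX_def)
  then show ?thesis using False by simp
qed


lemma amat_right: "mmul (dimX p q) X (amat p q s) i j =
  (if j < dimX p q then
     (if j = 0 then X i 0 * qreal (cosh s) + X i (lst p q) * qreal (sinh s)
      else if j = lst p q then X i 0 * qreal (sinh s) + X i (lst p q) * qreal (cosh s)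
      else X i j) else 0)"
proof (cases "j = 0 \<or> j = lst p q")
  case True
  have "mmul (dimX p q) X (amat p q s) i j
     = (\<Sum>k<dimX p q. if k = 0 then X i 0 * (if j = 0 then qreal (cosh s) else qreal (sinh s))
          else if k = lst p q then X i (lst p q) * (if j = 0 then qreal (sinh s) else qreal (cosh s)) else 0)"
    unfolding mmul_def using True by (intro sum.cong refl) (auto simp: amat_def Let_def dimX_def)
  also have "\<dots> = X i 0 * (if j = 0 then qreal (cosh s) else qreal (sinh s))
      + X i (lst p q) * (if j = 0 then qreal (sinh s) else qreal (cosh s))"
    by (rule sum_two) (auto simp: dimX_def)
  finally show ?thesis using True by (auto simp: dimX_def)
next
  case False
  have "mmul (dimX p q) X (amat p q s) i j = (\<Sum>k<dimX p q. if k = j then X i j else 0)"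
    unfolding mmul_def using False by (intro sum.cong refl) (auto simp: amat_def Let_def dimX_def)
  then show ?thesis using False by simp
qed

lemma adj_amat[simp]: "adj (amat p q s) = amat p q s"
  by (auto simp: adj_def amat_def Let_def intro!: ext)

lemma supp_amat[simp]: "supp (dimX p q) (amat p q s)"
  by (simp add: supp_def amat_def Let_def)

lemma cs_real: "cosh s * cosh s = 1 + sinh s * sinh (s::real)"
  using cosh_square_eq[of s] by (simp add: power2_eq_square)

lemma amat_G: "amat p q s \<in> Gset d p q"
proof -
  have "mmul (dimX p q) (mmul (dimX p q) (adj (amat p q s)) (Jm p q)) (amat p q s) = Jm p q"
  proof (intro ext)
    fix i j
    show "mmul (dimX p q) (mmul (dimX p q) (adj (amat p q s)) (Jm p q)) (amat p q s) i j = Jm p q i j"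
      unfolding amat_right adj_amat Jm_right
      by (auto simp: amat_def Let_def Jm_def sg_def dimX_def quat_eq_iff cs_real algebra_simps)
  qed
  then show ?thesis
    by (auto simp: Gset_def amat_def Let_def inF_def qreal_def)
qed

lemma amat_inv: "mmul (dimX p q) (amat p q r) (amat p q (- r)) = mid (dimX p q)"
  unfolding amat_right[abs_def]
  by (auto simp: amat_def Let_def mid_def dimX_def quat_eq_iff cs_real algebra_simps intro!: ext)

lemma Gset_mmul:
  assumes "g \<in> Gset d p q" "h \<in> Gset d p q"
  shows "mmul (dimX p q) g h \<in> Gset d p q"
proof -
  let ?n = "dimX p q" and ?J = "Jm p q"
  have g: "supp ?n g" "\<And>i j. inF d (g i j)" "mmul ?n (mmul ?n (adj g) ?J) g = ?J"
    using assms(1) by (auto simp: Gset_def supp_def)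
  have h: "supp ?n h" "\<And>i j. inF d (h i j)" "mmul ?n (mmul ?n (adj h) ?J) h = ?J"
    using assms(2) by (auto simp: Gset_def supp_def)
  have "mmul ?n (mmul ?n (adj (mmul ?n g h)) ?J) (mmul ?n g h)
      = mmul ?n (adj h) (mmul ?n (mmul ?n (mmul ?n (adj g) ?J) g) h)"
    by (simp add: adj_mmul mmul_assoc)
  also have "\<dots> = ?J" using g(3) h(3) by (simp add: mmul_assoc)
  finally have eq: "mmul ?n (mmul ?n (adj (mmul ?n g h)) ?J) (mmul ?n g h) = ?J" .
  have "supp ?n (mmul ?n g h)" by (rule supp_mmul[OF g(1) h(1)])
  moreover have "inF d (mmul ?n g h i j)" for i j
    unfolding mmul_def by (intro inF_sum inF_simps g(2) h(2))
  ultimately show ?thesis using eq by (auto simp: Gset_def supp_def)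
qed


definition lnorm :: "nat \<Rightarrow> nat \<Rightarrow> qmat \<Rightarrow> real" where
  "lnorm p q g = (\<Sum>t<Suc q. qn (g (t + Suc p) (lst p q)))"

lemma sum_dimX_split: "(\<Sum>m<dimX p q. f m) = (\<Sum>m<Suc p. f m) + (\<Sum>t<Suc q. f (t + Suc p))"
proof -
  have "dimX p q = Suc p + Suc q" by (simp add: dimX_def)
  then show ?thesis by (simp only: sum_lessThan_add)
qed

lemma Gset_D:
  assumes "g \<in> Gset d p q"
  shows "supp (dimX p q) g" "\<And>i j. inF d (g i j)"
    "mmul (dimX p q) (mmul (dimX p q) (adj g) (Jm p q)) g = Jm p q"
  using assms by (auto simp: Gset_def supp_def)

lemma Gset_I:
  assumes "supp (dimX p q) g" "\<And>i j. inF d (g i j)"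
    "mmul (dimX p q) (mmul (dimX p q) (adj g) (Jm p q)) g = Jm p q"
  shows "g \<in> Gset d p q"
  using assms by (auto simp: Gset_def supp_def)

lemma last_col_norm:
  assumes "g \<in> Gset d p q"
  shows "(\<Sum>m<Suc p. qn (g m (lst p q))) - (\<Sum>t<Suc q. qn (g (t + Suc p) (lst p q))) = -1"
proof -
  let ?n = "dimX p q" and ?l = "lst p q"
  have eq: "mmul ?n (mmul ?n (adj g) (Jm p q)) g ?l ?l = Jm p q ?l ?l"
    using Gset_D(3)[OF assms] by simp
  have "mmul ?n (mmul ?n (adj g) (Jm p q)) g ?l ?l = (\<Sum>m<?n. qcnj (g m ?l) * sg p m * g m ?l)"
    unfolding mmul_def[of ?n "mmul ?n (adj g) (Jm p q)"] Jm_right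
    by (intro sum.cong refl) (simp add: adj_def)
  also have "\<dots> = (\<Sum>m<Suc p. qreal (qn (g m ?l))) - (\<Sum>t<Suc q. qreal (qn (g (t + Suc p) ?l)))"
    unfolding sum_dimX_split by (simp add: sg_def qcnj_mult_self sum_negf)
  also have "\<dots> = qreal ((\<Sum>m<Suc p. qn (g m ?l)) - (\<Sum>t<Suc q. qn (g (t + Suc p) ?l)))"
    by (simp only: qreal_sum qreal_simps)
  finally have "qreal ((\<Sum>m<Suc p. qn (g m ?l)) - (\<Sum>t<Suc q. qn (g (t + Suc p) ?l))) = qreal (-1)"
    using eq by (simp add: Jm_def dimX_def)
  then show ?thesis by (simp only: qreal_inj)
qed

lemma decomp_unique:
  assumes k: "k \<in> Kset d p q" and h: "h \<in> Hset d p q"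
    and g: "g = mmul (dimX p q) (mmul (dimX p q) k (amat p q r)) h"
  shows "lnorm p q g = (cosh r)^2"
proof -
  let ?n = "dimX p q" and ?l = "lst p q"
  have kG: "k \<in> Gset d p q" and kb: "\<And>i j. (i \<le> p \<and> p < j) \<or> (p < i \<and> j \<le> p) \<Longrightarrow> k i j = 0"
    using k by (auto simp: Kset_def)
  have hG: "h \<in> Gset d p q" and hH: "\<And>i. i < ?l \<Longrightarrow> h i ?l = 0"
    using h by (auto simp: Hset_def dimX_def)
  define \<alpha> where "\<alpha> = h ?l ?l"
  have hcol: "h i ?l = (if i = ?l then \<alpha> else 0)" for i
  proof (cases "i < ?l")
    case False
    then have "i = ?l \<or> ?n \<le> i" by (auto simp: dimX_def)
    then show ?thesis using Gset_D(1)[OF hG] by (auto simp: supp_def \<alpha>_def)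
  qed (simp add: hH)
  have qa: "qn \<alpha> = 1"
    using last_col_norm[OF hG] by (simp add: hcol dimX_def)
  have gcol: "g i ?l = mmul ?n k (amat p q r) i ?l * \<alpha>" for i
  proof -
    have "g i ?l = (\<Sum>m<?n. if m = ?l then mmul ?n k (amat p q r) i ?l * \<alpha> else 0)"
      unfolding g mmul_def[of ?n "mmul ?n k (amat p q r)" h] hcol by (intro sum.cong) auto
    then show ?thesis by (simp add: dimX_def)
  qed
  have "lnorm p q g = (\<Sum>t<Suc q. qn (k (t + Suc p) ?l) * (cosh r)^2)"
    unfolding lnorm_def
  proof (intro sum.cong refl)
    fix t assume "t \<in> {..<Suc q}"
    have "k (t + Suc p) 0 = 0" by (intro kb) simp
    then have "g (t + Suc p) ?l = k (t + Suc p) ?l * qreal (cosh r) * \<alpha>"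
      unfolding gcol amat_right by (simp add: dimX_def)
    then show "qn (g (t + Suc p) ?l) = qn (k (t + Suc p) ?l) * (cosh r)^2"
      by (simp add: qn_mult qa)
  qed
  also have "\<dots> = (\<Sum>t<Suc q. qn (k (t + Suc p) ?l)) * (cosh r)^2"
    by (rule sum_distrib_right[symmetric])
  also have "(\<Sum>t<Suc q. qn (k (t + Suc p) ?l)) = 1"
  proof -
    have "(\<Sum>m<Suc p. qn (k m ?l)) = 0" by (intro sum.neutral) (auto simp: kb)
    then show ?thesis using last_col_norm[OF kG] by simp
  qed
  finally show ?thesis by simp
qed


lemma mmul_col_mid:
  assumes "supp n A" "\<And>m. B m j = mid n m j"
  shows "mmul n A B i j = A i j"
proof -
  have "mmul n A B i j = mmul n A (mid n) i j" unfolding mmul_def using assms(2) by simp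
  then show ?thesis using mmul_mid_right[OF assms(1)] by simp
qed

lemma mmul_row_mid:
  assumes "supp n B" "\<And>m. A i m = mid n i m"
  shows "mmul n A B i j = B i j"
proof -
  have "mmul n A B i j = mmul n (mid n) B i j" unfolding mmul_def using assms(2) by simp
  then show ?thesis using mmul_mid_left[OF assms(1)] by simp
qed

lemma decomp_exists:
  assumes gG: "g \<in> Gset d p q"
  shows "\<exists>k\<in>Kset d p q. \<exists>r. \<exists>h\<in>Hset d p q. g = mmul (dimX p q) (mmul (dimX p q) k (amat p q r)) h"
proof -
  let ?n = "dimX p q" and ?l = "lst p q" and ?J = "Jm p q"
  have gs: "supp ?n g" and gF: "\<And>i j. inF d (g i j)" using Gset_D[OF gG] by auto
  define x where "x i = g i ?l" for i
  define A where "A = (\<Sum>m<Suc p. qn (x m))"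
  define L where "L = (\<Sum>t<Suc q. qn (x (t + Suc p)))"
  have AL: "A - L = -1" using last_col_norm[OF gG] by (simp add: A_def L_def x_def)
  have A0: "A \<ge> 0" by (simp add: A_def sum_nonneg)
  have L1: "L = A + 1" using AL by simp
  have Lpos: "L > 0" using A0 L1 by simp
  define sA where "sA = sqrt A"
  define sL where "sL = sqrt L"
  define r where "r = arsinh sA"
  have sr: "sinh r = sA" by (simp add: r_def)
  have cr: "cosh r = sL" using A0 by (simp add: r_def cosh_arsinh_real sA_def sL_def L1)
  have sApos: "A \<noteq> 0 \<Longrightarrow> sA > 0" using A0 by (simp add: sA_def)
  have sLpos: "sL > 0" using Lpos by (simp add: sL_def)
  define b1 where "b1 i = (if A = 0 then (if i = 0 then 1 else 0) else if i \<le> p then qsc (1/sA) (x i) else 0)" for i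
  define b2 where "b2 i = (if p < i \<and> i < ?n then qsc (1/sL) (x i) else 0)" for i
  define B1 where "B1 = {..<Suc p}"
  define B2 where "B2 = {Suc p..<?n}"
  have xF: "inF d (x i)" for i by (simp add: x_def gF)
  have xge: "?n \<le> i \<Longrightarrow> x i = 0" for i using gs by (simp add: supp_def x_def)
  have xA0: "A = 0 \<Longrightarrow> i \<le> p \<Longrightarrow> x i = 0" for i
    using qn_sum_zero[of "{..<Suc p}" x i] by (simp add: A_def)
  have "\<exists>U. supp ?n U \<and> (\<forall>i j. inF d (U i j)) \<and> mmul ?n (adj U) U = mid ?n \<and> mmul ?n U (adj U) = mid ?n
     \<and> (\<forall>i j. i \<notin> B1 \<or> j \<notin> B1 \<longrightarrow> U i j = mid ?n i j) \<and> (\<forall>i. U i 0 = b1 i)"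
  proof (rule unit_map)
    show "B1 \<subseteq> {..<?n}" by (auto simp: B1_def dimX_def)
    show "0 \<in> B1" by (simp add: B1_def)
    show "i \<notin> B1 \<Longrightarrow> b1 i = 0" for i by (auto simp: B1_def b1_def)
    show "inF d (b1 i)" for i by (auto simp: b1_def intro: inF_simps xF)
    show "(\<Sum>i<?n. qn (b1 i)) = 1"
    proof (cases "A = 0")
      case True
      then show ?thesis by (simp add: b1_def if_distrib[of qn] dimX_def cong: if_cong)
    next
      case False
      have "(\<Sum>i<?n. qn (b1 i)) = (\<Sum>m<Suc p. qn (b1 m)) + (\<Sum>t<Suc q. qn (b1 (t + Suc p)))"
        by (rule sum_dimX_split)
      also have "(\<Sum>t<Suc q. qn (b1 (t + Suc p))) = 0" using False by (simp add: b1_def)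
      also have "(\<Sum>m<Suc p. qn (b1 m)) = (\<Sum>m<Suc p. (1/sA)^2 * qn (x m))"
        using False by (intro sum.cong) (auto simp: b1_def qn_qsc)
      also have "\<dots> = (1/sA)^2 * A" unfolding A_def by (rule sum_distrib_left[symmetric])
      also have "\<dots> = 1" using False A0 by (simp add: sA_def power_divide)
      finally show ?thesis by simp
    qed
  qed
  then obtain U1 where U1: "supp ?n U1" "\<And>i j. inF d (U1 i j)" "mmul ?n (adj U1) U1 = mid ?n"
    "mmul ?n U1 (adj U1) = mid ?n" "\<And>i j. i \<notin> B1 \<or> j \<notin> B1 \<Longrightarrow> U1 i j = mid ?n i j"
    "\<And>i. U1 i 0 = b1 i" by blast
  have "\<exists>U. supp ?n U \<and> (\<forall>i j. inF d (U i j)) \<and> mmul ?n (adj U) U = mid ?n \<and> mmul ?n U (adj U) = mid ?n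
     \<and> (\<forall>i j. i \<notin> B2 \<or> j \<notin> B2 \<longrightarrow> U i j = mid ?n i j) \<and> (\<forall>i. U i ?l = b2 i)"
  proof (rule unit_map)
    show "B2 \<subseteq> {..<?n}" by (auto simp: B2_def)
    show "?l \<in> B2" by (simp add: B2_def dimX_def)
    show "i \<notin> B2 \<Longrightarrow> b2 i = 0" for i by (auto simp: B2_def b2_def)
    show "inF d (b2 i)" for i by (auto simp: b2_def intro: inF_simps xF)
    show "(\<Sum>i<?n. qn (b2 i)) = 1"
    proof -
      have "(\<Sum>i<?n. qn (b2 i)) = (\<Sum>m<Suc p. qn (b2 m)) + (\<Sum>t<Suc q. qn (b2 (t + Suc p)))"
        by (rule sum_dimX_split)
      also have "(\<Sum>m<Suc p. qn (b2 m)) = 0" by (simp add: b2_def)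
      also have "(\<Sum>t<Suc q. qn (b2 (t + Suc p))) = (\<Sum>t<Suc q. (1/sL)^2 * qn (x (t + Suc p)))"
        by (intro sum.cong) (auto simp: b2_def qn_qsc dimX_def)
      also have "\<dots> = (1/sL)^2 * L" unfolding L_def by (rule sum_distrib_left[symmetric])
      also have "\<dots> = 1" using Lpos by (simp add: sL_def power_divide)
      finally show ?thesis by simp
    qed
  qed
  then obtain U2 where U2: "supp ?n U2" "\<And>i j. inF d (U2 i j)" "mmul ?n (adj U2) U2 = mid ?n"
    "mmul ?n U2 (adj U2) = mid ?n" "\<And>i j. i \<notin> B2 \<or> j \<notin> B2 \<Longrightarrow> U2 i j = mid ?n i j"
    "\<And>i. U2 i ?l = b2 i" by blast
  define k where "k = mmul ?n U1 U2"
  have ks: "supp ?n k" unfolding k_def by (rule supp_mmul[OF U1(1) U2(1)])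
  have kF: "inF d (k i j)" for i j unfolding k_def mmul_def by (intro inF_sum inF_simps U1(2) U2(2))
  have kk: "mmul ?n (adj k) k = mid ?n"
  proof -
    have "mmul ?n (adj k) k = mmul ?n (adj U2) (mmul ?n (mmul ?n (adj U1) U1) U2)"
      by (simp add: k_def adj_mmul mmul_assoc)
    then show ?thesis by (simp add: U1(3) mmul_mid_left U2(1) U2(3))
  qed
  have kk': "mmul ?n k (adj k) = mid ?n"
  proof -
    have "mmul ?n k (adj k) = mmul ?n U1 (mmul ?n (mmul ?n U2 (adj U2)) (adj U1))"
      by (simp add: k_def adj_mmul mmul_assoc)
    then show ?thesis by (simp add: U2(4) mmul_mid_left supp_adj U1(1) U1(4))
  qed
  have kcol0: "k i 0 = b1 i" for i
  proof -
    have "k i 0 = U1 i 0" unfolding k_def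
      by (rule mmul_col_mid[OF U1(1)]) (simp add: U2(5) B2_def)
    then show ?thesis by (simp add: U1(6))
  qed
  have kcoll: "k i ?l = b2 i" for i
  proof -
    have "k i ?l = mmul ?n (mid ?n) U2 i ?l" unfolding k_def mmul_def
    proof (intro sum.cong refl)
      fix m show "U1 i m * U2 m ?l = mid ?n i m * U2 m ?l"
        by (cases "m \<in> B2") (auto simp: U1(5) B1_def B2_def U2(6) b2_def)
    qed
    then show ?thesis by (simp add: mmul_mid_left U2(1) U2(6))
  qed
  have kb: "k i j = 0" if "(i \<le> p \<and> p < j) \<or> (p < i \<and> j \<le> p)" for i j
    unfolding k_def mmul_def
  proof (intro sum.neutral ballI)
    fix m assume "m \<in> {..<?n}"
    show "U1 i m * U2 m j = 0"
    proof (cases "m \<in> B2")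
      case True
      then have "U1 i m = mid ?n i m" using U1(5) by (auto simp: B1_def B2_def)
      moreover have "i \<noteq> m \<or> U2 m j = 0" using that True
        by (auto simp: B2_def U2(5) mid_def)
      ultimately show ?thesis by (auto simp: mid_def)
    next
      case False
      then have "U2 m j = mid ?n m j" using U2(5) by auto
      moreover have "m \<noteq> j \<or> U1 i m = 0" using that False
        by (auto simp: B1_def B2_def U1(5) mid_def)
      ultimately show ?thesis by (auto simp: mid_def)
    qed
  qed
  have Jk: "mmul ?n ?J k = mmul ?n k ?J"
  proof (intro ext)
    fix i j
    show "mmul ?n ?J k i j = mmul ?n k ?J i j"
      unfolding Jm_left Jm_right using ks kb[of i j]
      by (cases "i \<le> p"; cases "j \<le> p") (auto simp: sg_def supp_def)
  qed
  have kG: "k \<in> Gset d p q"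
  proof (rule Gset_I[OF ks kF])
    have "mmul ?n (mmul ?n (adj k) ?J) k = mmul ?n (adj k) (mmul ?n k ?J)"
      by (simp add: mmul_assoc Jk)
    also have "\<dots> = ?J" by (simp add: mmul_assoc[symmetric] kk mmul_mid_left)
    finally show "mmul ?n (mmul ?n (adj k) ?J) k = ?J" .
  qed
  have kK: "k \<in> Kset d p q" using kG kb by (simp add: Kset_def)
  have akG: "adj k \<in> Gset d p q"
  proof (rule Gset_I[OF supp_adj[OF ks]])
    show "inF d (adj k i j)" for i j by (simp add: adj_def kF inF_simps)
    have "mmul ?n (mmul ?n (adj (adj k)) ?J) (adj k) = mmul ?n (mmul ?n ?J k) (adj k)"
      by (simp add: Jk)
    also have "\<dots> = ?J" by (simp add: mmul_assoc kk' mmul_mid_right)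
    finally show "mmul ?n (mmul ?n (adj (adj k)) ?J) (adj k) = ?J" .
  qed
  define h where "h = mmul ?n (amat p q (- r)) (mmul ?n (adj k) g)"
  have hG: "h \<in> Gset d p q" unfolding h_def by (intro Gset_mmul amat_G akG gG)
  have xdec: "x j = k j 0 * qreal sA + k j ?l * qreal sL" for j
  proof (cases "j < ?n")
    case False then show ?thesis using xge ks by (simp add: supp_def)
  next
    case True
    show ?thesis
    proof (cases "j \<le> p")
      case True
      then show ?thesis using sApos
        by (cases "A = 0") (auto simp: kcol0 kcoll b1_def b2_def xA0 sA_def qsc_def'' mult.assoc
            simp flip: qreal_simps(5))
    next
      case False
      then show ?thesis using \<open>j < ?n\<close> sLpos
        by (auto simp: kcol0 kcoll b1_def b2_def qsc_def'' mult.assoc simp flip: qreal_simps(5))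
    qed
  qed
  have akg: "mmul ?n (adj k) g m ?l = mid ?n m 0 * qreal sA + mid ?n m ?l * qreal sL" for m
  proof -
    have "mmul ?n (adj k) g m ?l = (\<Sum>j<?n. adj k m j * (k j 0 * qreal sA + k j ?l * qreal sL))"
      unfolding mmul_def using xdec by (simp add: x_def)
    also have "\<dots> = mmul ?n (adj k) k m 0 * qreal sA + mmul ?n (adj k) k m ?l * qreal sL"
      by (simp add: mmul_def distrib_left sum.distrib sum_distrib_right mult.assoc)
    finally show ?thesis by (simp add: kk)
  qed
  have hH: "h \<in> Hset d p q"
  proof -
    have "h i ?l = 0" if "i < ?l" for i
    proof -
      have "h i ?l = (if i = 0 then qreal (cosh (- r)) * mmul ?n (adj k) g 0 ?l
          + qreal (sinh (- r)) * mmul ?n (adj k) g ?l ?l else mmul ?n (adj k) g i ?l)"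
        unfolding h_def amat_left using that by (simp add: dimX_def)
      also have "\<dots> = 0" unfolding akg using that
        by (auto simp: mid_def dimX_def sr cr quat_eq_iff)
      finally show ?thesis .
    qed
    then show ?thesis using hG by (auto simp: Hset_def dimX_def)
  qed
  have "mmul ?n (mmul ?n k (amat p q r)) h = g"
  proof -
    have "mmul ?n (mmul ?n k (amat p q r)) h
        = mmul ?n k (mmul ?n (mmul ?n (amat p q r) (amat p q (- r))) (mmul ?n (adj k) g))"
      by (simp add: h_def mmul_assoc)
    also have "\<dots> = mmul ?n (mmul ?n k (adj k)) g"
      by (simp add: amat_inv mmul_mid_left supp_mmul supp_adj ks gs mmul_assoc)
    also have "\<dots> = g" by (simp add: kk' mmul_mid_left gs)
    finally show ?thesis .
  qed
  then show ?thesis using kK hH by metis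
qed


lemma psi_eval:
  assumes "g \<in> Gset d p q"
  shows "psi d p q lam g = sqrt (lnorm p q g) powr (- lam - rho_q d p q)"
  unfolding psi_def
proof (rule the_equality)
  have cs: "sqrt ((cosh r)^2) = cosh r" for r :: real
    using cosh_real_pos[of r] by simp
  obtain k r h where kh: "k \<in> Kset d p q" "h \<in> Hset d p q"
    "g = mmul (dimX p q) (mmul (dimX p q) k (amat p q r)) h"
    using decomp_exists[OF assms] by blast
  then have ln: "lnorm p q g = (cosh r)^2" by (intro decomp_unique)
  show "\<exists>k\<in>Kset d p q. \<exists>s. \<exists>h\<in>Hset d p q. g = mmul (dimX p q) (mmul (dimX p q) k (amat p q s)) h
      \<and> sqrt (lnorm p q g) powr (- lam - rho_q d p q) = cosh s powr (- lam - rho_q d p q)"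
    apply (rule bexI[of _ k], rule exI[of _ r], rule bexI[of _ h])
    using kh ln cs by auto
  fix c assume "\<exists>k\<in>Kset d p q. \<exists>s. \<exists>h\<in>Hset d p q. g = mmul (dimX p q) (mmul (dimX p q) k (amat p q s)) h
      \<and> c = cosh s powr (- lam - rho_q d p q)"
  then obtain k' s h' where kh': "k' \<in> Kset d p q" "h' \<in> Hset d p q"
    "g = mmul (dimX p q) (mmul (dimX p q) k' (amat p q s)) h'" "c = cosh s powr (- lam - rho_q d p q)"
    by blast
  then have "lnorm p q g = (cosh s)^2" by (intro decomp_unique)
  then show "c = sqrt (lnorm p q g) powr (- lam - rho_q d p q)" using kh'(4) cs by simp
qed



lemma lnorm_gen:
  assumes w: "qre w = 0"
  shows "lnorm p q (mmul (dimX p q) (amat p q s) (EE p q u v w))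
    = (\<Sum>t<q. qn (v t)) + (cosh s + exp s * ((\<Sum>k<p. qn (u k)) - (\<Sum>k<q. qn (v k))) / 2)^2
      + exp (2 * s) * qn w"
proof -
  let ?n = "dimX p q" and ?l = "lst p q" and ?N = "Nmat p q u v w" and ?E = "EE p q u v w"
  define ccr where "ccr = (\<Sum>k<p. qn (u k)) - (\<Sum>k<q. qn (v k))"
  have ccq: "cc p q u v = qreal ccr" by (simp add: cc_def ccr_def)
  have Ecol: "?E i ?l = mid ?n i ?l + ?N i ?l + qsc (1/2) (mmul ?n ?N ?N i ?l)" for i
    by (simp add: EE_def madd_def msc_def)
  have low: "mmul ?n (amat p q s) ?E (t + Suc p) ?l = - qcnj (v t)" if "t < q" for t
  proof -
    have "mmul ?n (amat p q s) ?E (t + Suc p) ?l = ?E (t + Suc p) ?l"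
      unfolding amat_left using that by (simp add: dimX_def)
    also have "\<dots> = - qcnj (v t)"
      unfolding Ecol NN_sq N_col using that N_v0[of t q p u v w]
      by (simp add: mid_def dimX_def)
    finally show ?thesis .
  qed
  have N0l: "?N 0 ?l = w" using N_col[of p q u v w 0] by (simp add: N_00)
  have Nll: "?N ?l ?l = w" using N0l N_rowE[of p q u v w ?l] by simp
  have E0: "?E 0 ?l = w + qsc (1/2) (qreal ccr)"
    unfolding Ecol NN_sq by (simp add: mid_def N0l ccq dimX_def)
  have El: "?E ?l ?l = 1 + w + qsc (1/2) (qreal ccr)"
    unfolding Ecol NN_sq by (simp add: mid_def Nll ccq dimX_def)
  have last: "mmul ?n (amat p q s) ?E ?l ?l
      = qreal (sinh s) * (w + qsc (1/2) (qreal ccr)) + qreal (cosh s) * (1 + w + qsc (1/2) (qreal ccr))"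
    unfolding amat_left by (simp add: dimX_def E0 El)
  have qnl: "qn (mmul ?n (amat p q s) ?E ?l ?l) = (cosh s + exp s * ccr / 2)^2 + exp (2 * s) * qn w"
  proof -
    have e: "exp s = sinh s + cosh s" by (simp add: sinh_plus_cosh)
    have e2: "exp (2 * s) = (sinh s + cosh s)^2"
      by (simp add: e[symmetric] power2_eq_square flip: exp_add)
    show ?thesis unfolding last e2 e using w
      by (simp add: qn_def power2_eq_square algebra_simps)
  qed
  have "lnorm p q (mmul ?n (amat p q s) ?E) = (\<Sum>t<q. qn (mmul ?n (amat p q s) ?E (t + Suc p) ?l))
      + qn (mmul ?n (amat p q s) ?E ?l ?l)"
    by (simp add: lnorm_def add.commute)
  also have "(\<Sum>t<q. qn (mmul ?n (amat p q s) ?E (t + Suc p) ?l)) = (\<Sum>t<q. qn (v t))"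
    by (intro sum.cong refl) (simp add: low[simplified])
  finally show ?thesis using qnl by (simp add: ccr_def)
qed


definition PhiX :: "nat \<Rightarrow> nat \<Rightarrow> nat \<Rightarrow> real \<Rightarrow> (nat \<Rightarrow> real) \<Rightarrow> real" where
  "PhiX d p q s y = (\<Sum>i\<in>{..<d*p}. (y i)^2) + (\<Sum>i\<in>{..<d*(q-p)}. (y (d*p+i))^2)
     + (cosh s - exp s * (\<Sum>i\<in>{..<d*(q-p)}. (y (d*p+i))^2) / 2)^2 + exp (2 * s) * (\<Sum>i\<in>{..<d-1}. (y (d*q+i))^2)"

lemma qof_F: "inF d (qof d y off)" by (simp add: inF_def qof_def)
lemma imof_F: "inF d (imof d y off)" by (simp add: inF_def imof_def)
lemma u_of_F: "inF d (u_of d p y i)" by (simp add: u_of_def qof_F inF_simps)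
lemma v_of_F: "inF d (v_of d p q y i)" by (simp add: v_of_def qof_F u_of_F inF_simps)

lemma N_F: "(\<And>i. inF d (u i)) \<Longrightarrow> (\<And>i. inF d (v i)) \<Longrightarrow> inF d w \<Longrightarrow> inF d (Nmat p q u v w i j)"
  by (auto simp: Nmat_def Let_def intro!: inF_simps)

lemma nstar_EE: "nstar d p q y = EE p q (u_of d p y) (v_of d p q y) (imof d y (d * q))"
  by (simp add: nstar_def mexp_EE)

lemma nstar_G: "nstar d p q y \<in> Gset d p q"
proof (rule Gset_I)
  let ?u = "u_of d p y" and ?v = "v_of d p q y" and ?w = "imof d y (d * q)"
  show "supp (dimX p q) (nstar d p q y)" unfolding nstar_EE by (rule supp_EE)
  have NF: "inF d (Nmat p q ?u ?v ?w i j)" for i j by (intro N_F u_of_F v_of_F imof_F)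
  show "inF d (nstar d p q y i j)" for i j
    unfolding nstar_EE EE_def madd_def msc_def mmul_def mid_def
    by (intro inF_simps inF_sum NF) (auto intro: inF_simps)
  show "mmul (dimX p q) (mmul (dimX p q) (adj (nstar d p q y)) (Jm p q)) (nstar d p q y) = Jm p q"
    unfolding nstar_EE by (rule EE_G) (simp add: imof_def)
qed

lemma qn_qof: "d \<in> {1,2,4} \<Longrightarrow> qn (qof d y off) = (\<Sum>j<d. (y (off + j))^2)"
  by (auto simp: qn_def qof_def numeral_eq_Suc)

lemma qn_imof: "d \<in> {1,2,4} \<Longrightarrow> qn (imof d y off) = (\<Sum>j\<in>{..<d-1}. (y (off + j))^2)"
  by (auto simp: qn_def imof_def numeral_eq_Suc)

lemma sum_blocks: "(\<Sum>t<(m::nat). \<Sum>j<d. f ((d::nat)*t + j)) = (\<Sum>i\<in>{..<d*m}. f i :: real)"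
proof (induction m)
  case (Suc m)
  have e: "d * Suc m = d*m + d" by simp
  have "(\<Sum>i\<in>{..<d*Suc m}. f i) = (\<Sum>i\<in>{..<d*m + d}. f i)" by (simp only: e)
  also have "\<dots> = (\<Sum>i\<in>{..<d*m}. f i) + (\<Sum>k<d. f (k + d*m))" by (rule sum_lessThan_add)
  finally show ?case using Suc by (simp add: add.commute)
qed simp

lemma lnorm_nstar:
  assumes d: "d \<in> {1,2,4}" and pq: "p \<le> q"
  shows "lnorm p q (mmul (dimX p q) (amat p q s) (nstar d p q y)) = PhiX d p q s y"
proof -
  let ?u = "u_of d p y" and ?v = "v_of d p q y" and ?w = "imof d y (d * q)"
  define U where "U = (\<Sum>i\<in>{..<d*p}. (y i)^2)"
  define V where "V = (\<Sum>i\<in>{..<d*(q-p)}. (y (d*p+i))^2)"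
  define W where "W = (\<Sum>i\<in>{..<d-1}. (y (d*q+i))^2)"
  have Uu: "(\<Sum>k<p. qn (?u k)) = U"
  proof -
    have "(\<Sum>k<p. qn (?u k)) = (\<Sum>k<p. \<Sum>j<d. (y (d*k + j))^2)"
      by (intro sum.cong refl) (simp add: u_of_def qn_qof[OF d])
    then show ?thesis unfolding U_def using sum_blocks[where f = "\<lambda>i. (y i)^2" and m = p and d = d] by simp
  qed
  have Vv: "(\<Sum>k<q. qn (?v k)) = U + V"
  proof -
    have qeq: "q = p + (q - p)" using pq by simp
    have "(\<Sum>k<q. qn (?v k)) = (\<Sum>k<p. qn (?v k)) + (\<Sum>m<q-p. qn (?v (m + p)))"
      by (subst qeq, subst sum_lessThan_add) simp
    also have "(\<Sum>k<p. qn (?v k)) = (\<Sum>k<p. qn (?u (p - Suc k)))"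
      by (intro sum.cong refl) (simp add: v_of_def)
    also have "\<dots> = (\<Sum>k<p. qn (?u k))" by (rule sum.nat_diff_reindex)
    also have "(\<Sum>m<q-p. qn (?v (m + p))) = (\<Sum>m<q-p. \<Sum>j<d. (y (d*p + (d*m + j)))^2)"
      using pq by (intro sum.cong refl) (simp add: v_of_def qn_qof[OF d] add.assoc)
    also have "\<dots> = V" unfolding V_def by (rule sum_blocks[where f = "\<lambda>i. (y (d*p+i))^2"])
    finally show ?thesis by (simp add: Uu)
  qed
  have Ww: "qn ?w = W" by (simp add: W_def qn_imof[OF d])
  have w0: "qre ?w = 0" by (simp add: imof_def)
  show ?thesis
    unfolding nstar_EE lnorm_gen[OF w0] Uu Vv Ww PhiX_def U_def[symmetric] V_def[symmetric] W_def[symmetric]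
    by (simp add: algebra_simps)
qed

lemma psi_nstar:
  assumes d: "d \<in> {1,2,4}" and pq: "p \<le> q"
  shows "psi d p q lam (mmul (dimX p q) (amat p q s) (nstar d p q y))
     = sqrt (PhiX d p q s y) powr (- lam - rho_q d p q)"
  using psi_eval[OF Gset_mmul[OF amat_G nstar_G]] lnorm_nstar[OF d pq] by simp



lemma emeasure_lborel_scale:
  assumes "(c::real) \<noteq> 0" "A \<in> sets borel"
  shows "emeasure lborel ((*) c -` A) = ennreal (inverse \<bar>c\<bar>) * emeasure lborel A"
proof -
  have "emeasure lborel ((*) c -` A) = emeasure (distr lborel borel ((*) c)) A"
    using assms by (simp add: emeasure_distr)
  also have "\<dots> = emeasure (density lborel (\<lambda>_. ennreal (inverse \<bar>c\<bar>))) A"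
    using lborel_distr_mult[OF assms(1)] by simp
  also have "\<dots> = ennreal (inverse \<bar>c\<bar>) * emeasure lborel A"
    using assms by (simp add: emeasure_density_const)
  finally show ?thesis .
qed



lemma pim_change:
  fixes n :: nat and \<sigma> :: "nat \<Rightarrow> nat" and c :: "nat \<Rightarrow> real" and f :: "(nat \<Rightarrow> real) \<Rightarrow> real"
  assumes bij: "bij_betw \<sigma> {..<n} {..<n}" and c: "\<And>i. i<n \<Longrightarrow> c i \<noteq> 0"
    and f: "f \<in> borel_measurable (Pi\<^sub>M {..<n} (\<lambda>_. lborel))"
  shows "(\<integral>y. f (restrict (\<lambda>i. c i * y (\<sigma> i)) {..<n}) \<partial>Pi\<^sub>M {..<n} (\<lambda>_. lborel))
       = (\<Prod>i<n. inverse \<bar>c i\<bar>) * (\<integral>z. f z \<partial>Pi\<^sub>M {..<n} (\<lambda>_. lborel))"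
proof -
  let ?I = "{..<n}"
  let ?M = "Pi\<^sub>M ?I (\<lambda>_. lborel::real measure)"
  define T where "T y = restrict (\<lambda>i. c i * y (\<sigma> i)) ?I" for y :: "nat \<Rightarrow> real"
  define \<tau> where "\<tau> = the_inv_into ?I \<sigma>"
  have \<sigma>I: "i < n \<Longrightarrow> \<sigma> i < n" for i using bij by (auto simp: bij_betw_def)
  have \<tau>I: "j < n \<Longrightarrow> \<tau> j < n" for j using bij unfolding \<tau>_def
    by (metis bij_betw_def lessThan_iff order_refl the_inv_into_into)
  have \<sigma>\<tau>: "j < n \<Longrightarrow> \<sigma> (\<tau> j) = j" for j using bij unfolding \<tau>_def
    by (simp add: bij_betw_def f_the_inv_into_f)
  have \<tau>\<sigma>: "i < n \<Longrightarrow> \<tau> (\<sigma> i) = i" for i using bij unfolding \<tau>_def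
    by (simp add: bij_betw_def the_inv_into_f_f)
  interpret PS: product_sigma_finite "\<lambda>_. lborel::real measure"
    by (simp add: product_sigma_finite_def sigma_finite_lborel)
  have Tm[measurable]: "T \<in> measurable ?M ?M"
    unfolding T_def
    by (rule measurable_restrict) (use \<sigma>I in auto)
  have pre_meas: "B \<in> sets borel \<Longrightarrow> (*) (a::real) -` B \<in> sets borel" for a B
    using measurable_sets[of "(*) a" borel borel B] by auto
  define K where "K = (\<Prod>i<n. \<bar>c i\<bar>)"
  have Kpos: "K > 0" unfolding K_def using c by (intro prod_pos) auto
  have eq: "density (distr ?M ?M T) (\<lambda>_. ennreal K) = ?M"
  proof (rule PS.PiM_eqI)
    show "finite ?I" by simp
    show "sets (density (distr ?M ?M T) (\<lambda>_. ennreal K)) = sets ?M" by simp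
    fix A :: "nat \<Rightarrow> real set" assume A: "\<And>i. i \<in> ?I \<Longrightarrow> A i \<in> sets lborel"
    have Ae: "Pi\<^sub>E ?I A \<in> sets ?M" using A by (intro sets_PiM_I_finite) auto
    have pre: "T -` Pi\<^sub>E ?I A \<inter> space ?M = Pi\<^sub>E ?I (\<lambda>j. (*) (c (\<tau> j)) -` A (\<tau> j))"
    proof (intro set_eqI iffI)
      fix y assume "y \<in> T -` Pi\<^sub>E ?I A \<inter> space ?M"
      then have y: "\<And>i. i < n \<Longrightarrow> c i * y (\<sigma> i) \<in> A i" and ye: "y \<in> extensional ?I"
        by (auto simp: T_def space_PiM PiE_def Pi_iff)
      show "y \<in> Pi\<^sub>E ?I (\<lambda>j. (*) (c (\<tau> j)) -` A (\<tau> j))"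
        using y[OF \<tau>I] ye by (auto simp: PiE_def \<sigma>\<tau>)
    next
      fix y assume "y \<in> Pi\<^sub>E ?I (\<lambda>j. (*) (c (\<tau> j)) -` A (\<tau> j))"
      then have y: "\<And>j. j < n \<Longrightarrow> c (\<tau> j) * y j \<in> A (\<tau> j)" and ye: "y \<in> extensional ?I"
        by (auto simp: PiE_def)
      show "y \<in> T -` Pi\<^sub>E ?I A \<inter> space ?M"
        using y[OF \<sigma>I] ye by (auto simp: T_def space_PiM PiE_def \<tau>\<sigma>)
    qed
    have "emeasure (density (distr ?M ?M T) (\<lambda>_. ennreal K)) (Pi\<^sub>E ?I A)
        = ennreal K * emeasure (distr ?M ?M T) (Pi\<^sub>E ?I A)"
      using Ae by (simp add: emeasure_density_const)
    also have "emeasure (distr ?M ?M T) (Pi\<^sub>E ?I A) = emeasure ?M (T -` Pi\<^sub>E ?I A \<inter> space ?M)"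
      using Ae by (simp add: emeasure_distr)
    also have "\<dots> = (\<Prod>j\<in>?I. emeasure lborel ((*) (c (\<tau> j)) -` A (\<tau> j)))"
      unfolding pre using A \<tau>I pre_meas by (intro PS.emeasure_PiM) auto
    also have "\<dots> = (\<Prod>j\<in>?I. ennreal (inverse \<bar>c (\<tau> j)\<bar>) * emeasure lborel (A (\<tau> j)))"
      using A \<tau>I c by (intro prod.cong refl emeasure_lborel_scale) auto
    also have "\<dots> = (\<Prod>i\<in>?I. ennreal (inverse \<bar>c i\<bar>) * emeasure lborel (A i))"
    proof -
      have "bij_betw \<tau> ?I ?I" unfolding \<tau>_def using bij by (rule bij_betw_the_inv_into)
      then show ?thesis by (rule prod.reindex_bij_betw)
    qed
    also have "\<dots> = ennreal (\<Prod>i\<in>?I. inverse \<bar>c i\<bar>) * (\<Prod>i\<in>?I. emeasure lborel (A i))"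
      by (simp add: prod.distrib prod_ennreal)
    also have "ennreal K * (ennreal (\<Prod>i\<in>?I. inverse \<bar>c i\<bar>) * (\<Prod>i\<in>?I. emeasure lborel (A i)))
        = (\<Prod>i\<in>?I. emeasure lborel (A i))"
    proof -
      have "K * (\<Prod>i\<in>?I. inverse \<bar>c i\<bar>) = 1"
        unfolding K_def prod.distrib[symmetric] using c by (intro prod.neutral) auto
      then have "ennreal K * ennreal (\<Prod>i\<in>?I. inverse \<bar>c i\<bar>) = 1"
        using Kpos by (simp add: ennreal_mult'[symmetric])
      then show ?thesis by (simp add: mult.assoc[symmetric])
    qed
    finally show "emeasure (density (distr ?M ?M T) (\<lambda>_. ennreal K)) (Pi\<^sub>E ?I A) = (\<Prod>i\<in>?I. emeasure lborel (A i))" .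
  qed
  have "(\<integral>z. f z \<partial>?M) = (\<integral>z. f z \<partial>density (distr ?M ?M T) (\<lambda>_. ennreal K))"
    by (simp add: eq)
  also have "\<dots> = (\<integral>z. K *\<^sub>R f z \<partial>distr ?M ?M T)"
    using Kpos by (intro integral_density) (auto simp: f)
  also have "\<dots> = (\<integral>y. K *\<^sub>R f (T y) \<partial>?M)"
    using f by (intro integral_distr) auto
  also have "\<dots> = K * (\<integral>y. f (T y) \<partial>?M)" by simp
  finally have "(\<integral>y. f (T y) \<partial>?M) = inverse K * (\<integral>z. f z \<partial>?M)"
    using Kpos by (simp add: field_simps)
  moreover have "inverse K = (\<Prod>i<n. inverse \<bar>c i\<bar>)" unfolding K_def using prod_inversef[of "\<lambda>i. \<bar>c i\<bar>" "{..<n}"] by (simp add: o_def)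
  ultimately show ?thesis unfolding T_def by simp
qed


lemma comp_meas: "i < N \<Longrightarrow> (\<lambda>z. z i) \<in> borel_measurable (Pi\<^sub>M {..<N} (\<lambda>_. lborel))"
  using measurable_component_singleton[of i "{..<N}" "\<lambda>_. lborel"] by simp

lemma PhiX_meas:
  assumes "d*q + (d - 1) \<le> N" "p \<le> q"
  shows "PhiX d p q s \<in> borel_measurable (Pi\<^sub>M {..<N} (\<lambda>_. lborel))"
proof -
  have a: "i < d * p \<Longrightarrow> i < N" for i using assms
    by (meson dual_order.strict_trans2 le_add1 less_le_trans mult_le_mono2)
  have b: "i < d * (q - p) \<Longrightarrow> d * p + i < N" for i using assms
    by (metis add_diff_inverse_nat add_less_cancel_left diff_mult_distrib2 le_add1 less_le_trans
        mult_le_mono2 not_le)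
  have c: "i < d - 1 \<Longrightarrow> d * q + i < N" for i using assms by linarith
  show ?thesis
    unfolding PhiX_def[abs_def]
    by (intro borel_measurable_add borel_measurable_diff borel_measurable_times borel_measurable_power
        borel_measurable_sum borel_measurable_const borel_measurable_divide comp_meas a b c) auto
qed


lemma F_meas:
  assumes "d*q + (d - 1) \<le> N" "p \<le> q"
  shows "(\<lambda>z. sqrt (PhiX d p q s z) powr E) \<in> borel_measurable (Pi\<^sub>M {..<N} (\<lambda>_. lborel))"
proof -
  have "(\<lambda>z. sqrt (PhiX d p q s z)) \<in> borel_measurable (Pi\<^sub>M {..<N} (\<lambda>_. lborel))"
    using measurable_compose[OF PhiX_meas[OF assms] borel_measurable_sqrt] by (simp add: o_def)
  then show ?thesis by (intro powr_real_measurable) auto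
qed

lemma radon_formula:
  assumes d: "d \<in> {1,2,4}" and pq: "p \<le> q"
  shows "Radon d p q (psi d p q lam) (amat p q s)
    = (\<integral>y. sqrt (PhiX d p q s y) powr (- lam - rho_q d p q) \<partial>Pi\<^sub>M {..<ncoord d p q} (\<lambda>_. lborel))"
  unfolding Radon_def by (simp add: psi_nstar[OF d pq])

theorem mainTheorem7:
  fixes d p q p' q' :: nat and lam :: real and mu :: int
  assumes "d \<in> {2, 4}"
    and "p < q"
    and "p' + 1 = d * (p + 1)" and "q' + 1 = d * (q + 1)"
    and "lam = (real (d * q) - real (d * p)) / 2 - 1 + of_int mu"
    and "even mu" and "lam > 0"
  shows "rho_q d p q = (real p' + real q') / 2
    \<and> rho_q 1 p' q' = (real p' + real q') / 2
    \<and> (\<forall>s. Radon d p q (psi d p q lam) (amat p q s)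
           = exp (- (real d - 1) * s) * Radon 1 p' q' (psi 1 p' q' lam) (amat p' q' s))
    \<and> Aop d p q (psi d p q lam) = Aop 1 p' q' (psi 1 p' q' lam)"
proof -
  have d1: "d \<ge> 1" using assms(1) by auto
  have d124: "d \<in> {1,2,4}" using assms(1) by auto
  have pq: "p \<le> q" using assms(2) by simp
  have p'eq: "p' = d*p + (d - 1)" using assms(3) d1 by (simp add: algebra_simps)
  have q'eq: "q' = d*q + (d - 1)" using assms(4) d1 by (simp add: algebra_simps)
  have dpq: "d*p \<le> d*q" using pq by simp
  have pq': "p' \<le> q'" using dpq p'eq q'eq by simp
  have rp: "real p' = real d * real p + real d - 1" using p'eq d1 by (simp add: of_nat_diff)
  have rq: "real q' = real d * real q + real d - 1" using q'eq d1 by (simp add: of_nat_diff)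
  have r1: "rho_q d p q = (real p' + real q') / 2" unfolding rho_q_def rp rq by simp
  have r2: "rho_q 1 p' q' = (real p' + real q') / 2" by (simp add: rho_q_def)
  define N where "N = d*q + (d - 1)"
  have nc1: "ncoord d p q = N" using d1 by (simp add: ncoord_def N_def)
  have nc2: "ncoord 1 p' q' = N" by (simp add: ncoord_def N_def q'eq)
  define E where "E = - lam - rho_q d p q"
  have E': "- lam - rho_q 1 p' q' = E" unfolding E_def r1 r2 by simp
  have radon: "Radon d p q (psi d p q lam) (amat p q s)
           = exp (- (real d - 1) * s) * Radon 1 p' q' (psi 1 p' q' lam) (amat p' q' s)" for s
  proof -
    define P where "P = d*p"
    define Q where "Q = d*q"
    have PQ: "P \<le> Q" using dpq by (simp add: P_def Q_def)
    have NQ: "N = Q + (d - 1)" by (simp add: N_def Q_def)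
    define \<sigma> where "\<sigma> i = (if i < P then i else if i < P + (d - 1) then i - P + Q else i - (d - 1))" for i
    define c where "c i = (if P \<le> i \<and> i < P + (d - 1) then exp s else 1)" for i
    define F where "F z = sqrt (PhiX 1 p' q' s z) powr E" for z
    have \<sigma>N: "\<sigma> ` {..<N} \<subseteq> {..<N}" using PQ by (auto simp: \<sigma>_def NQ)
    have \<sigma>inj: "inj_on \<sigma> {..<N}" using PQ by (auto simp: inj_on_def \<sigma>_def NQ split: if_splits)
    have bij: "bij_betw \<sigma> {..<N} {..<N}"
      using endo_inj_surj[OF _ \<sigma>N \<sigma>inj] \<sigma>inj by (simp add: bij_betw_def)
    have cnz: "c i \<noteq> 0" for i by (simp add: c_def)
    have p'P: "p' = P + (d - 1)" by (simp add: p'eq P_def)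
    have qpP: "q' - p' = Q - P" using p'eq q'eq by (simp add: P_def Q_def)
    have PhiT: "PhiX 1 p' q' s (restrict (\<lambda>i. c i * y (\<sigma> i)) {..<N}) = PhiX d p q s y" for y
    proof -
      let ?z = "restrict (\<lambda>i. c i * y (\<sigma> i)) {..<N}"
      have U: "(\<Sum>i\<in>{..<p'}. (?z i)^2) = (\<Sum>i\<in>{..<P}. (y i)^2) + exp (2 * s) * (\<Sum>i\<in>{..<d-1}. (y (Q+i))^2)"
      proof -
        have "(\<Sum>i\<in>{..<p'}. (?z i)^2) = (\<Sum>i\<in>{..<P}. (?z i)^2) + (\<Sum>j<d - 1. (?z (j + P))^2)"
          unfolding p'P by (rule sum_lessThan_add)
        also have "(\<Sum>i\<in>{..<P}. (?z i)^2) = (\<Sum>i\<in>{..<P}. (y i)^2)"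
          using PQ by (intro sum.cong refl) (auto simp: \<sigma>_def c_def NQ)
        also have "(\<Sum>j<d - 1. (?z (j + P))^2) = (\<Sum>j<d - 1. exp (2 * s) * (y (Q + j))^2)"
          using PQ by (intro sum.cong refl)
            (auto simp: \<sigma>_def c_def NQ power_mult_distrib exp_double[symmetric] add.commute)
        finally show ?thesis by (simp add: sum_distrib_left)
      qed
      have V: "(\<Sum>i\<in>{..<q' - p'}. (?z (p' + i))^2) = (\<Sum>i\<in>{..<Q - P}. (y (P+i))^2)"
        unfolding qpP using PQ by (intro sum.cong refl) (auto simp: \<sigma>_def c_def NQ p'P)
      have dqp: "d * (q - p) = Q - P" by (simp add: P_def Q_def diff_mult_distrib2)
      show ?thesis unfolding PhiX_def dqp P_def[symmetric] Q_def[symmetric] using U V by simp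
    qed
    have Fm: "F \<in> borel_measurable (Pi\<^sub>M {..<N} (\<lambda>_. lborel))"
      unfolding F_def by (rule F_meas[OF _ pq']) (simp add: N_def q'eq)
    have "Radon d p q (psi d p q lam) (amat p q s)
        = (\<integral>y. F (restrict (\<lambda>i. c i * y (\<sigma> i)) {..<N}) \<partial>Pi\<^sub>M {..<N} (\<lambda>_. lborel))"
      unfolding radon_formula[OF d124 pq] nc1 F_def PhiT E_def ..
    also have "\<dots> = (\<Prod>i<N. inverse \<bar>c i\<bar>) * (\<integral>z. F z \<partial>Pi\<^sub>M {..<N} (\<lambda>_. lborel))"
      by (rule pim_change[OF bij cnz Fm])
    also have "(\<Prod>i<N. inverse \<bar>c i\<bar>) = exp (- (real d - 1) * s)"
    proof -
      have "(\<Prod>i<N. inverse \<bar>c i\<bar>) = (\<Prod>i\<in>{P..<P + (d - 1)}. inverse (exp s))"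
      proof (rule prod.mono_neutral_cong_right)
        show "{P..<P + (d - 1)} \<subseteq> {..<N}" using PQ by (auto simp: NQ)
      qed (auto simp: c_def)
      also have "\<dots> = exp (- s) ^ (d - 1)" by (simp add: exp_minus)
      also have "\<dots> = exp (real (d - 1) * (- s))" by (rule exp_of_nat_mult[symmetric])
      finally show ?thesis using d1 by (simp add: of_nat_diff algebra_simps)
    qed
    also have "(\<integral>z. F z \<partial>Pi\<^sub>M {..<N} (\<lambda>_. lborel)) = Radon 1 p' q' (psi 1 p' q' lam) (amat p' q' s)"
    proof -
      have "Radon 1 p' q' (psi 1 p' q' lam) (amat p' q' s)
          = (\<integral>y. sqrt (PhiX 1 p' q' s y) powr (- lam - rho_q 1 p' q') \<partial>Pi\<^sub>M {..<ncoord 1 p' q'} (\<lambda>_. lborel))"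
        by (rule radon_formula) (simp_all add: pq')
      then show ?thesis unfolding nc2 E' F_def by simp
    qed
    finally show ?thesis .
  qed
  have aop: "Aop d p q (psi d p q lam) = Aop 1 p' q' (psi 1 p' q' lam)"
  proof (intro ext)
    fix s
    have le: "real (d*p) \<le> real (d*q)" using dpq by (simp only: of_nat_le_iff)
    then have ab: "\<bar>real (d*p) - real (d*q)\<bar> = real (d*q) - real (d*p)" by simp
    have h1: "rho_1 d p q = real d * (real q - real p) / 2 + (real d - 1)"
      unfolding rho_1_def ab by (simp add: field_simps)
    have h2: "rho_1 1 p' q' = real d * (real q - real p) / 2"
    proof -
      have ab2: "\<bar>real (1*p') - real (1*q')\<bar> = real q' - real p'" using pq' by simp
      show ?thesis unfolding rho_1_def ab2 rp rq by (simp add: algebra_simps)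
    qed
    have key: "rho_1 d p q * s + (- (real d - 1) * s) = rho_1 1 p' q' * s"
      unfolding h1 h2 by (simp add: algebra_simps)
    show "Aop d p q (psi d p q lam) s = Aop 1 p' q' (psi 1 p' q' lam) s"
      unfolding Aop_def radon by (simp only: mult.assoc[symmetric] exp_add[symmetric] key)
  qed
  show ?thesis using r1 r2 radon aop by blast
qed


end
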